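(* For every smooth $\mathfrak{g}$-valued section $\varphi$ of $\Lambda^2_+\mathbb{R}^8$ on $\mathbb{R}^8$, \[\mathbb{L}_B\mathbb{L}_B^*\varphi = \nabla_B^*\nabla_B\varphi - 2\sum_{k,l=1}^4 e_k^\perp \wedge [F_B(e_k^\perp,e_l^\perp), i_{e_l^\perp}\varphi].\]
   Context: Write $\mathbb{R}^8 = E \oplus E^\perp$ with orthonormal basis $e_1,\dots,e_4$ of $E$ and $e_1^\perp,\dots,e_4^\perp$ of $E^\perp$; vectors are identified with covectors via the Euclidean metric; coordinates $(x,y)$, $x\in E$, $y=\sum_k y_k e_k^\perp$. The $4$-form $\Omega$ is $\Omega = -e_1 e_2 e_1^\perp e_2^\perp - e_1 e_2 e_3^\perp e_4^\perp - e_3 e_4 e_1^\perp e_2^\perp - e_3 e_4 e_3^\perp e_4^\perp + e_1 e_3 e_2^\perp e_4^\perp - e_1 e_3 e_1^\perp e_3^\perp - e_2 e_4 e_2^\perp e_4^\perp + e_2 e_4 e_1^\perp e_3^\perp - e_1 e_4 e_2^\perp e_3^\perp - e_1 e_4 e_1^\perp e_4^\perp - e_2 e_3 e_2^\perp e_3^\perp - e_2 e_3 e_1^\perp e_4^\perp + e_1 e_2 e_3 e_4 + e_1^\perp e_2^\perp e_3^\perp e_4^\perp$ (juxtaposition = wedge). With $*$ the Euclidean Hodge star (orientation $e_1\wedge\dots\wedge e_4\wedge e_1^\perp\wedge\dots\wedge e_4^\perp$), $\Lambda^2_+\mathbb{R}^8 = \{\varphi: 3\varphi - *(\Omega\wedge\varphi)=0\}$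 and $P_+\varphi=\frac14(\varphi+*(\Omega\wedge\varphi))$ is the projection onto it. $\mathfrak{g}\subset\mathfrak{so}(E^\perp)$ is spanned by $\mathfrak{i},\mathfrak{j},\mathfrak{k}$ with $\mathfrak{i}(e_1^\perp)=-e_2^\perp, \mathfrak{i}(e_2^\perp)=e_1^\perp, \mathfrak{i}(e_3^\perp)=e_4^\perp, \mathfrak{i}(e_4^\perp)=-e_3^\perp$; $\mathfrak{j}(e_1^\perp)=-e_3^\perp, \mathfrak{j}(e_2^\perp)=-e_4^\perp, \mathfrak{j}(e_3^\perp)=e_1^\perp, \mathfrak{j}(e_4^\perp)=e_2^\perp$; $\mathfrak{k}(e_1^\perp)=-e_4^\perp, \mathfrak{k}(e_2^\perp)=e_3^\perp, \mathfrak{k}(e_3^\perp)=-e_2^\perp, \mathfrak{k}(e_4^\perp)=e_1^\perp$; fix an $\mathrm{ad}$-invariant inner product on $\mathfrak{g}$. Fix $\varepsilon>0$; $B$ is the $\mathfrak{g}$-valued $1$-form with $B(e_i)=0$ ($1\le i\le4$), $B(e_1^\perp)=\frac{-y_2\mathfrak{i}-y_3\mathfrak{j}-y_4\mathfrak{k}}{\varepsilon^2+|y|^2}$, $B(e_2^\perp)=\frac{y_1\mathfrak{i}-y_4\mathfrak{j}+y_3\mathfrak{k}}{\varepsilon^2+|y|^2}$, $B(e_3^\perp)=\frac{y_4\mathfrak{i}+y_1\mathfrak{j}-y_2\mathfrak{k}}{\varepsilon^2+|y|^2}$, $B(e_4^\perp)=\frac{-y_3\mathfrak{i}+y_2\mathfrak{j}+y_1\mathfrak{k}}{\varepsilon^2+|y|^2}$.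 On $\mathfrak{g}$-valued forms, $D_B\omega = d\omega + [B\wedge\omega]$ is the exterior covariant derivative, $D_B^*$ its formal $L^2$-adjoint, $F_B=dB+\frac12[B\wedge B]$ the curvature, $\nabla_B$ the covariant derivative induced by the flat Euclidean connection and $\mathrm{ad}(B)$, and $\nabla_B^*\nabla_B$ the associated rough Laplacian. The linearized operator is $\mathbb{L}_B a = 2P_+D_Ba$ (from $\mathfrak{g}$-valued $1$-forms to $\mathfrak{g}$-valued sections of $\Lambda^2_+$), and $\mathbb{L}_B^*\varphi = 2D_B^*\varphi$. *)

theory Defs
  imports "HOL-Analysis.Analysis"
begin

text \<open>Basis of R^8 = E + E-perp: E1..E4 are e_1..e_4, P1..P4 are e_1-perp..e_4-perp.
  The order E1 < ... < E4 < P1 < ... < P4 is the orientation order.\<close>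

datatype ix = E1 | E2 | E3 | E4 | P1 | P2 | P3 | P4

lemma UNIV_ix: "(UNIV :: ix set) = {E1, E2, E3, E4, P1, P2, P3, P4}"
  using ix.exhaust by auto

instance ix :: finite
  by standard (simp add: UNIV_ix)

text \<open>Index type for the orthonormal basis e_1-perp..e_4-perp of E-perp,
  on which the Lie algebra g (a subalgebra of so(E-perp)) acts.\<close>

datatype iq = Q1 | Q2 | Q3 | Q4

lemma UNIV_iq: "(UNIV :: iq set) = {Q1, Q2, Q3, Q4}"
  using iq.exhaust by auto

instance iq :: finite
  by standard (simp add: UNIV_iq)

fun rank :: "ix \<Rightarrow> nat" where
  "rank E1 = 0" | "rank E2 = 1" | "rank E3 = 2" | "rank E4 = 3"
| "rank P1 = 4" | "rank P2 = 5" | "rank P3 = 6" | "rank P4 = 7"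

text \<open>A (possibly vector-valued) form at a point is represented by its coefficients:
  \<open>\<alpha> S\<close> is the coefficient of e_S = e_{s1} \<and> ... \<and> e_{sk}, where s1 < ... < sk
  lists S in increasing order.\<close>

definition sgn :: "ix set \<Rightarrow> ix set \<Rightarrow> real" where
  "sgn S T = (-1) ^ card {(s, t). s \<in> S \<and> t \<in> T \<and> rank t < rank s}"

text \<open>For disjoint S, T: e_S \<and> e_T = sgn S T e_{S \<union> T}. The wedge product is taken
  with respect to a bilinear pairing m of the coefficients.\<close>

definition wedge_with ::
  "('a \<Rightarrow> 'b \<Rightarrow> 'c::real_vector) \<Rightarrow> (ix set \<Rightarrow> 'a) \<Rightarrow> (ix set \<Rightarrow> 'b) \<Rightarrow> ix set \<Rightarrow> 'c" where
  "wedge_with m \<alpha> \<beta> U = (\<Sum>S\<in>Pow U. sgn S (U - S) *\<^sub>R m (\<alpha> S) (\<beta> (U - S)))"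

definition swedge :: "(ix set \<Rightarrow> real) \<Rightarrow> (ix set \<Rightarrow> 'v::real_vector) \<Rightarrow> ix set \<Rightarrow> 'v" where
  "swedge \<alpha> \<beta> = wedge_with (\<lambda>r v. r *\<^sub>R v) \<alpha> \<beta>"

text \<open>The basis covector e_a (identified with the vector e_a).\<close>
definition ev :: "ix \<Rightarrow> ix set \<Rightarrow> real" where
  "ev a S = (if S = {a} then 1 else 0)"

definition mono :: "ix list \<Rightarrow> ix set \<Rightarrow> real" where
  "mono as = foldr (\<lambda>a w. swedge (ev a) w) as (\<lambda>S. if S = {} then 1 else 0)"

text \<open>Euclidean Hodge star for orientation e_1 \<and> ... \<and> e_4 \<and> e_1-perp \<and> ... \<and> e_4-perp:
  * e_S = sgn S S^c e_{S^c}.\<close>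
definition star :: "(ix set \<Rightarrow> 'v::real_vector) \<Rightarrow> ix set \<Rightarrow> 'v" where
  "star \<alpha> U = sgn (UNIV - U) U *\<^sub>R \<alpha> (UNIV - U)"

definition intprod :: "ix \<Rightarrow> (ix set \<Rightarrow> 'v::real_vector) \<Rightarrow> ix set \<Rightarrow> 'v" where
  "intprod a \<alpha> T = (if a \<in> T then 0 else sgn {a} T *\<^sub>R \<alpha> (insert a T))"

definition eval2 :: "(ix set \<Rightarrow> 'v::real_vector) \<Rightarrow> ix \<Rightarrow> ix \<Rightarrow> 'v" where
  "eval2 F a b = (if a = b then 0 else sgn {a} {b} *\<^sub>R F {a, b})"

definition Omega :: "ix set \<Rightarrow> real" where
  "Omega S =
     - mono [E1,E2,P1,P2] S - mono [E1,E2,P3,P4] S - mono [E3,E4,P1,P2] S - mono [E3,E4,P3,P4] S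
     + mono [E1,E3,P2,P4] S - mono [E1,E3,P1,P3] S - mono [E2,E4,P2,P4] S + mono [E2,E4,P1,P3] S
     - mono [E1,E4,P2,P3] S - mono [E1,E4,P1,P4] S - mono [E2,E3,P2,P3] S - mono [E2,E3,P1,P4] S
     + mono [E1,E2,E3,E4] S + mono [P1,P2,P3,P4] S"

type_synonym gmat = "real^iq^iq"

definition basis_q :: "iq \<Rightarrow> real^iq" where
  "basis_q k = axis k 1"

text \<open>The matrix of the linear map sending e_c-perp to f c.\<close>
definition op_mat :: "(iq \<Rightarrow> real^iq) \<Rightarrow> gmat" where
  "op_mat f = (\<chi> r c. f c $ r)"

definition gi :: gmat where
  "gi = op_mat (\<lambda>c. case c of Q1 \<Rightarrow> - basis_q Q2 | Q2 \<Rightarrow> basis_q Q1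
                              | Q3 \<Rightarrow> basis_q Q4 | Q4 \<Rightarrow> - basis_q Q3)"

definition gj :: gmat where
  "gj = op_mat (\<lambda>c. case c of Q1 \<Rightarrow> - basis_q Q3 | Q2 \<Rightarrow> - basis_q Q4
                              | Q3 \<Rightarrow> basis_q Q1 | Q4 \<Rightarrow> basis_q Q2)"

definition gk :: gmat where
  "gk = op_mat (\<lambda>c. case c of Q1 \<Rightarrow> - basis_q Q4 | Q2 \<Rightarrow> basis_q Q3
                              | Q3 \<Rightarrow> - basis_q Q2 | Q4 \<Rightarrow> basis_q Q1)"

definition g_alg :: "gmat set" where
  "g_alg = span {gi, gj, gk}"

definition gbr :: "gmat \<Rightarrow> gmat \<Rightarrow> gmat" where
  "gbr X Y = X ** Y - Y ** X"

type_synonym pt = "real^ix"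
type_synonym gform = "pt \<Rightarrow> ix set \<Rightarrow> gmat"

primrec Ck :: "nat \<Rightarrow> ('a::real_normed_vector \<Rightarrow> 'b::real_normed_vector) \<Rightarrow> bool" where
  "Ck 0 f = continuous_on UNIV f"
| "Ck (Suc n) f = (f differentiable_on UNIV \<and>
                   (\<forall>v. Ck n (\<lambda>p. frechet_derivative f (at p) v)))"

definition smooth :: "('a::real_normed_vector \<Rightarrow> 'b::real_normed_vector) \<Rightarrow> bool" where
  "smooth f = (\<forall>n. Ck n f)"

definition smooth_form :: "gform \<Rightarrow> bool" where
  "smooth_form \<omega> = (\<forall>S. smooth (\<lambda>p. \<omega> p S))"

definition pd :: "ix \<Rightarrow> gform \<Rightarrow> gform" where
  "pd a \<omega> p S = frechet_derivative (\<lambda>q. \<omega> q S) (at p) (axis a 1)"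

definition dform :: "gform \<Rightarrow> gform" where
  "dform \<omega> p U = (\<Sum>a\<in>U. sgn {a} (U - {a}) *\<^sub>R pd a \<omega> p (U - {a}))"

definition ysq :: "pt \<Rightarrow> real" where
  "ysq p = (p $ P1)^2 + (p $ P2)^2 + (p $ P3)^2 + (p $ P4)^2"

definition Bc :: "real \<Rightarrow> pt \<Rightarrow> ix \<Rightarrow> gmat" where
  "Bc \<epsilon> p a = (1 / (\<epsilon>^2 + ysq p)) *\<^sub>R
     (case a of
        P1 \<Rightarrow> (- p$P2) *\<^sub>R gi + (- p$P3) *\<^sub>R gj + (- p$P4) *\<^sub>R gk
      | P2 \<Rightarrow> (p$P1) *\<^sub>R gi + (- p$P4) *\<^sub>R gj + (p$P3) *\<^sub>R gk
      | P3 \<Rightarrow> (p$P4) *\<^sub>R gi + (p$P1) *\<^sub>R gj + (- p$P2) *\<^sub>R gk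
      | P4 \<Rightarrow> (- p$P3) *\<^sub>R gi + (p$P2) *\<^sub>R gj + (p$P1) *\<^sub>R gk
      | _ \<Rightarrow> 0)"

text \<open>B as a g-valued 1-form: B = sum_a B(e_a) e^a.\<close>
definition Bform :: "real \<Rightarrow> gform" where
  "Bform \<epsilon> p S = (if \<exists>a. S = {a} then Bc \<epsilon> p (the_elem S) else 0)"

definition DB :: "real \<Rightarrow> gform \<Rightarrow> gform" where
  "DB \<epsilon> \<omega> p U = dform \<omega> p U + wedge_with gbr (Bform \<epsilon> p) (\<omega> p) U"

definition FB :: "real \<Rightarrow> gform" where
  "FB \<epsilon> p U = dform (Bform \<epsilon>) p U + (1/2) *\<^sub>R wedge_with gbr (Bform \<epsilon> p) (Bform \<epsilon> p) U"

definition cov :: "ix \<Rightarrow> real \<Rightarrow> gform \<Rightarrow> gform" where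
  "cov a \<epsilon> \<omega> p S = pd a \<omega> p S + gbr (Bc \<epsilon> p a) (\<omega> p S)"

definition rough_lap :: "real \<Rightarrow> gform \<Rightarrow> gform" where
  "rough_lap \<epsilon> \<omega> p S = - (\<Sum>a\<in>UNIV. cov a \<epsilon> (cov a \<epsilon> \<omega>) p S)"

text \<open>Formal L^2 adjoint of D_B (w.r.t. the Euclidean metric and an ad-invariant
  inner product on g): D_B^* w = - sum_a i_{e_a} nabla_{B,e_a} w.\<close>
definition DBstar :: "real \<Rightarrow> gform \<Rightarrow> gform" where
  "DBstar \<epsilon> \<omega> p T = - (\<Sum>a\<in>UNIV. intprod a (cov a \<epsilon> \<omega> p) T)"

definition Pplus :: "(ix set \<Rightarrow> gmat) \<Rightarrow> ix set \<Rightarrow> gmat" where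
  "Pplus \<phi> U = (1/4) *\<^sub>R (\<phi> U + star (swedge Omega \<phi>) U)"

definition is_two_form :: "(ix set \<Rightarrow> 'v::real_vector) \<Rightarrow> bool" where
  "is_two_form \<phi> = (\<forall>U. card U \<noteq> 2 \<longrightarrow> \<phi> U = 0)"

definition in_Lambda2plus :: "(ix set \<Rightarrow> gmat) \<Rightarrow> bool" where
  "in_Lambda2plus \<phi> = (is_two_form \<phi> \<and> (\<forall>U. 3 *\<^sub>R \<phi> U - star (swedge Omega \<phi>) U = 0))"

definition g_valued :: "gform \<Rightarrow> bool" where
  "g_valued \<omega> = (\<forall>p S. \<omega> p S \<in> g_alg)"

definition LB :: "real \<Rightarrow> gform \<Rightarrow> gform" where
  "LB \<epsilon> a p U = 2 *\<^sub>R Pplus (DB \<epsilon> a p) U"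

definition LBstar :: "real \<Rightarrow> gform \<Rightarrow> gform" where
  "LBstar \<epsilon> \<phi> p T = 2 *\<^sub>R DBstar \<epsilon> \<phi> p T"

definition Pperp :: "ix set" where
  "Pperp = {P1, P2, P3, P4}"

end

theory Submission
  imports Defs
begin


lemma sgn_prod: "sgn S T = (\<Prod>s\<in>S. \<Prod>t\<in>T. if rank t < rank s then -1 else 1)"
proof -
  have "(\<Prod>s\<in>S. \<Prod>t\<in>T. if rank t < rank s then -1 else (1::real))
      = (\<Prod>x\<in>S\<times>T. if rank (snd x) < rank (fst x) then -1 else 1)"
    by (simp add: prod.cartesian_product case_prod_beta)
  also have "\<dots> = (\<Prod>x\<in>(S\<times>T) \<inter> {x. rank (snd x) < rank (fst x)}. -1)"
    by (simp add: prod.If_cases)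
  also have "\<dots> = (-1) ^ card ((S\<times>T) \<inter> {x. rank (snd x) < rank (fst x)})" by simp
  also have "(S\<times>T) \<inter> {x. rank (snd x) < rank (fst x)} = {(s, t). s \<in> S \<and> t \<in> T \<and> rank t < rank s}"
    by auto
  finally show ?thesis unfolding sgn_def by simp
qed

lemma swedge_ev: "swedge (ev b) g U = (if b \<in> U then sgn {b} (U - {b}) *\<^sub>R g (U - {b}) else 0)"
proof -
  have "swedge (ev b) g U = (\<Sum>S\<in>Pow U. if S = {b} then sgn S (U - S) *\<^sub>R g (U - S) else 0)"
    unfolding swedge_def wedge_with_def ev_def by (intro sum.cong) auto
  also have "\<dots> = (if b \<in> U then sgn {b} (U - {b}) *\<^sub>R g (U - {b}) else 0)"
    by (simp add: sum.delta')
  finally show ?thesis .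
qed

lemma swedge_ind: "swedge (\<lambda>S. if S = K then 1 else 0) g U = (if K \<subseteq> U then sgn K (U - K) *\<^sub>R g (U - K) else 0)"
proof -
  have "swedge (\<lambda>S. if S = K then 1 else 0) g U = (\<Sum>S\<in>Pow U. if S = K then sgn S (U - S) *\<^sub>R g (U - S) else 0)"
    unfolding swedge_def wedge_with_def by (intro sum.cong) auto
  also have "\<dots> = (if K \<subseteq> U then sgn K (U - K) *\<^sub>R g (U - K) else 0)"
    by (simp add: sum.delta')
  finally show ?thesis .
qed

lemma mono_sorted: "sorted_wrt (\<lambda>x y. rank x < rank y) as \<Longrightarrow> mono as = (\<lambda>S. if S = set as then 1 else 0)"
proof (induction as)
  case Nil
  then show ?case by (simp add: mono_def)
next
  case (Cons a as)
  have IH: "mono as = (\<lambda>S. if S = set as then 1 else 0)" using Cons by simp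
  have na: "a \<notin> set as" using Cons.prems by auto
  have s1: "sgn {a} (set as) = 1"
    using Cons.prems unfolding sgn_prod by (auto intro!: prod.neutral simp: less_imp_not_less)
  have "mono (a # as) = swedge (ev a) (mono as)" by (simp add: mono_def)
  moreover have "swedge (ev a) (mono as) S = (if S = set (a # as) then 1 else 0)" for S
  proof (cases "a \<in> S \<and> S - {a} = set as")
    case True
    then have "S = insert a (set as)" by auto
    then show ?thesis using True s1 by (simp add: swedge_ev IH)
  next
    case False
    then have "S \<noteq> insert a (set as)" using na by auto
    then show ?thesis using False by (auto simp add: swedge_ev IH)
  qed
  ultimately show ?case by auto
qed

lemma swedge_add1: "swedge (\<lambda>S. f S + g S) h U = swedge f h U + swedge g h U"
  unfolding swedge_def wedge_with_def by (simp add: scaleR_add_left sum.distrib algebra_simps)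
lemma swedge_diff1: "swedge (\<lambda>S. f S - g S) h U = swedge f h U - swedge g h U"
  unfolding swedge_def wedge_with_def by (simp add: scaleR_diff_left sum_subtractf algebra_simps)
lemma swedge_uminus1: "swedge (\<lambda>S. - f S) h U = - swedge f h U"
  unfolding swedge_def wedge_with_def by (simp add: sum_negf)

definition swK :: "ix set \<Rightarrow> (ix set \<Rightarrow> 'v::real_vector) \<Rightarrow> ix set \<Rightarrow> 'v" where
  "swK K g U = (if K \<subseteq> U then sgn K (U - K) *\<^sub>R g (U - K) else 0)"

lemma swedge_Omega: "swedge Omega g U =
     - swK {E1,E2,P1,P2} g U - swK {E1,E2,P3,P4} g U - swK {E3,E4,P1,P2} g U - swK {E3,E4,P3,P4} g U
     + swK {E1,E3,P2,P4} g U - swK {E1,E3,P1,P3} g U - swK {E2,E4,P2,P4} g U + swK {E2,E4,P1,P3} g U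
     - swK {E1,E4,P2,P3} g U - swK {E1,E4,P1,P4} g U - swK {E2,E3,P2,P3} g U - swK {E2,E3,P1,P4} g U
     + swK {E1,E2,E3,E4} g U + swK {P1,P2,P3,P4} g U"
proof -
  have e: "Omega = (\<lambda>S.
     - (if S = {E1,E2,P1,P2} then 1 else 0) - (if S = {E1,E2,P3,P4} then 1 else 0) - (if S = {E3,E4,P1,P2} then 1 else 0) - (if S = {E3,E4,P3,P4} then 1 else 0)
     + (if S = {E1,E3,P2,P4} then 1 else 0) - (if S = {E1,E3,P1,P3} then 1 else 0) - (if S = {E2,E4,P2,P4} then 1 else 0) + (if S = {E2,E4,P1,P3} then 1 else 0)
     - (if S = {E1,E4,P2,P3} then 1 else 0) - (if S = {E1,E4,P1,P4} then 1 else 0) - (if S = {E2,E3,P2,P3} then 1 else 0) - (if S = {E2,E3,P1,P4} then 1 else 0)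
     + (if S = {E1,E2,E3,E4} then 1 else 0) + (if S = {P1,P2,P3,P4} then (1::real) else 0))"
    unfolding Omega_def by (rule ext) (simp add: mono_sorted)
  show ?thesis unfolding e swedge_add1 swedge_diff1 swedge_uminus1 swedge_ind swK_def ..
qed

lemma ins_sort:
  "insert E2 (insert E1 A) = insert E1 (insert E2 A)"
  "insert E3 (insert E1 A) = insert E1 (insert E3 A)"
  "insert E3 (insert E2 A) = insert E2 (insert E3 A)"
  "insert E4 (insert E1 A) = insert E1 (insert E4 A)"
  "insert E4 (insert E2 A) = insert E2 (insert E4 A)"
  "insert E4 (insert E3 A) = insert E3 (insert E4 A)"
  "insert P1 (insert E1 A) = insert E1 (insert P1 A)"
  "insert P1 (insert E2 A) = insert E2 (insert P1 A)"
  "insert P1 (insert E3 A) = insert E3 (insert P1 A)"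
  "insert P1 (insert E4 A) = insert E4 (insert P1 A)"
  "insert P2 (insert E1 A) = insert E1 (insert P2 A)"
  "insert P2 (insert E2 A) = insert E2 (insert P2 A)"
  "insert P2 (insert E3 A) = insert E3 (insert P2 A)"
  "insert P2 (insert E4 A) = insert E4 (insert P2 A)"
  "insert P2 (insert P1 A) = insert P1 (insert P2 A)"
  "insert P3 (insert E1 A) = insert E1 (insert P3 A)"
  "insert P3 (insert E2 A) = insert E2 (insert P3 A)"
  "insert P3 (insert E3 A) = insert E3 (insert P3 A)"
  "insert P3 (insert E4 A) = insert E4 (insert P3 A)"
  "insert P3 (insert P1 A) = insert P1 (insert P3 A)"
  "insert P3 (insert P2 A) = insert P2 (insert P3 A)"
  "insert P4 (insert E1 A) = insert E1 (insert P4 A)"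
  "insert P4 (insert E2 A) = insert E2 (insert P4 A)"
  "insert P4 (insert E3 A) = insert E3 (insert P4 A)"
  "insert P4 (insert E4 A) = insert E4 (insert P4 A)"
  "insert P4 (insert P1 A) = insert P1 (insert P4 A)"
  "insert P4 (insert P2 A) = insert P2 (insert P4 A)"
  "insert P4 (insert P3 A) = insert P3 (insert P4 A)"
  by auto

lemma tab:
  "star (swedge Omega g) {E1,E2} = g {E3,E4} - g {P1,P2} - g {P3,P4}"
  "star (swedge Omega g) {E1,E3} = - g {E2,E4} - g {P1,P3} + g {P2,P4}"
  "star (swedge Omega g) {E1,E4} = g {E2,E3} - g {P1,P4} - g {P2,P3}"
  "star (swedge Omega g) {E1,P1} = g {E2,P2} + g {E3,P3} + g {E4,P4}"
  "star (swedge Omega g) {E1,P2} = - g {E2,P1} - g {E3,P4} + g {E4,P3}"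
  "star (swedge Omega g) {E1,P3} = g {E2,P4} - g {E3,P1} - g {E4,P2}"
  "star (swedge Omega g) {E1,P4} = - g {E2,P3} + g {E3,P2} - g {E4,P1}"
  "star (swedge Omega g) {E2,E3} = g {E1,E4} - g {P1,P4} - g {P2,P3}"
  "star (swedge Omega g) {E2,E4} = - g {E1,E3} + g {P1,P3} - g {P2,P4}"
  "star (swedge Omega g) {E2,P1} = - g {E1,P2} + g {E3,P4} - g {E4,P3}"
  "star (swedge Omega g) {E2,P2} = g {E1,P1} + g {E3,P3} + g {E4,P4}"
  "star (swedge Omega g) {E2,P3} = - g {E1,P4} - g {E3,P2} + g {E4,P1}"
  "star (swedge Omega g) {E2,P4} = g {E1,P3} - g {E3,P1} - g {E4,P2}"
  "star (swedge Omega g) {E3,E4} = g {E1,E2} - g {P1,P2} - g {P3,P4}"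
  "star (swedge Omega g) {E3,P1} = - g {E1,P3} - g {E2,P4} + g {E4,P2}"
  "star (swedge Omega g) {E3,P2} = g {E1,P4} - g {E2,P3} - g {E4,P1}"
  "star (swedge Omega g) {E3,P3} = g {E1,P1} + g {E2,P2} + g {E4,P4}"
  "star (swedge Omega g) {E3,P4} = - g {E1,P2} + g {E2,P1} - g {E4,P3}"
  "star (swedge Omega g) {E4,P1} = - g {E1,P4} + g {E2,P3} - g {E3,P2}"
  "star (swedge Omega g) {E4,P2} = - g {E1,P3} - g {E2,P4} + g {E3,P1}"
  "star (swedge Omega g) {E4,P3} = g {E1,P2} - g {E2,P1} - g {E3,P4}"
  "star (swedge Omega g) {E4,P4} = g {E1,P1} + g {E2,P2} + g {E3,P3}"
  "star (swedge Omega g) {P1,P2} = - g {E1,E2} - g {E3,E4} + g {P3,P4}"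
  "star (swedge Omega g) {P1,P3} = - g {E1,E3} + g {E2,E4} - g {P2,P4}"
  "star (swedge Omega g) {P1,P4} = - g {E1,E4} - g {E2,E3} + g {P2,P3}"
  "star (swedge Omega g) {P2,P3} = - g {E1,E4} - g {E2,E3} + g {P1,P4}"
  "star (swedge Omega g) {P2,P4} = g {E1,E3} - g {E2,E4} - g {P1,P3}"
  "star (swedge Omega g) {P3,P4} = - g {E1,E2} - g {E3,E4} + g {P1,P2}"
  by (simp_all add: star_def swedge_Omega swK_def UNIV_ix sgn_prod ins_sort insert_Diff_if)


definition PP :: "(ix set \<Rightarrow> 'v::real_vector) \<Rightarrow> ix set \<Rightarrow> 'v" where
  "PP f U = (1/4) *\<^sub>R (f U + star (swedge Omega f) U)"

lemma L2_rel:
  fixes g :: "ix set \<Rightarrow> real"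
  assumes a: "\<forall>U. 3 * g U - star (swedge Omega g) U = 0"
  shows "g {E2,P3} = -g {E1,P4}" and
    "g {E3,P2} = g {E1,P4}" and
    "g {E4,P1} = -g {E1,P4}" and
    "g {E2,P4} = g {E1,P3}" and
    "g {E3,P1} = -g {E1,P3}" and
    "g {E4,P2} = -g {E1,P3}" and
    "g {E2,P1} = -g {E1,P2}" and
    "g {E3,P4} = -g {E1,P2}" and
    "g {E4,P3} = g {E1,P2}" and
    "g {E2,P2} = g {E1,P1}" and
    "g {E3,P3} = g {E1,P1}" and
    "g {E4,P4} = g {E1,P1}" and
    "g {E2,E3} = g {E1,E4}" and
    "g {P1,P4} = -g {E1,E4}" and
    "g {P2,P3} = -g {E1,E4}" and
    "g {E2,E4} = -g {E1,E3}" and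
    "g {P1,P3} = -g {E1,E3}" and
    "g {P2,P4} = g {E1,E3}" and
    "g {E3,E4} = g {E1,E2}" and
    "g {P1,P2} = -g {E1,E2}" and
    "g {P3,P4} = -g {E1,E2}"
  using a[rule_format, of "{E1,E2}", unfolded tab] a[rule_format, of "{E1,E3}", unfolded tab] a[rule_format, of "{E1,E4}", unfolded tab] a[rule_format, of "{E1,P1}", unfolded tab] a[rule_format, of "{E1,P2}", unfolded tab] a[rule_format, of "{E1,P3}", unfolded tab] a[rule_format, of "{E1,P4}", unfolded tab] a[rule_format, of "{E2,E3}", unfolded tab] a[rule_format, of "{E2,E4}", unfolded tab] a[rule_format, of "{E2,P1}", unfolded tab] a[rule_format, of "{E2,P2}", unfolded tab] a[rule_format, of "{E2,P3}", unfolded tab] a[rule_format, of "{E2,P4}", unfolded tab] a[rule_format, of "{E3,E4}", unfolded tab] a[rule_format, of "{E3,P1}", unfolded tab] a[rule_format, of "{E3,P2}", unfolded tab] a[rule_format, of "{E3,P3}", unfolded tab] a[rule_format, of "{E3,P4}", unfolded tab] a[rule_format, of "{E4,P1}", unfolded tab] a[rule_format, of "{E4,P2}", unfolded tab] a[rule_format, of "{E4,P3}", unfolded tab] a[rule_format, of "{E4,P4}", unfolded tab] a[rule_format, of "{P1,P2}", unfolded tab] a[rule_format, of "{P1,P3}", unfolded tab] a[rule_format, of "{P1,P4}", unfolded tab] a[rule_format, of "{P2,P3}", unfolded tab] a[rule_format, of "{P2,P4}", unfolded tab] a[rule_format, of "{P3,P4}", unfolded tab]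
  apply -
  apply (linarith)+
  done

lemma pairs_cases:
  assumes "card (U::ix set) = 2" and "P {E1,E2}" and "P {E1,E3}" and "P {E1,E4}" and "P {E1,P1}" and "P {E1,P2}" and "P {E1,P3}" and "P {E1,P4}" and "P {E2,E3}" and "P {E2,E4}" and "P {E2,P1}" and "P {E2,P2}" and "P {E2,P3}" and "P {E2,P4}" and "P {E3,E4}" and "P {E3,P1}" and "P {E3,P2}" and "P {E3,P3}" and "P {E3,P4}" and "P {E4,P1}" and "P {E4,P2}" and "P {E4,P3}" and "P {E4,P4}" and "P {P1,P2}" and "P {P1,P3}" and "P {P1,P4}" and "P {P2,P3}" and "P {P2,P4}" and "P {P3,P4}"
  shows "P U"
proof -
  obtain x y where "U = {x,y}" "x \<noteq> y" using assms(1) by (auto simp: card_2_iff)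
  then show ?thesis using assms(2-29) by (cases x; cases y; simp add: ins_sort)
qed


definition sgn1 :: "ix \<Rightarrow> ix \<Rightarrow> real" where
  "sgn1 x y = (if rank y < rank x then -1 else 1)"

lemma sgn_single: "sgn {x} {y} = sgn1 x y"
  by (simp add: sgn_prod sgn1_def)

lemma sw_ev_pair: "c \<noteq> d \<Longrightarrow> swedge (ev b) f {c,d} =
   (if b = c then sgn1 c d *\<^sub>R f {d} else if b = d then sgn1 d c *\<^sub>R f {c} else 0)"
  by (auto simp add: swedge_ev sgn_single insert_Diff_if)

lemma intprod_single: "intprod a f {x} = (if a = x then 0 else sgn1 a x *\<^sub>R f {a,x})"
  by (simp add: intprod_def sgn_single)

lemma R1_test:
  fixes \<psi> :: "ix set \<Rightarrow> real"
  assumes "\<psi> {E2,P3} = -\<psi> {E1,P4}" and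
    "\<psi> {E3,P2} = \<psi> {E1,P4}" and
    "\<psi> {E4,P1} = -\<psi> {E1,P4}" and
    "\<psi> {E2,P4} = \<psi> {E1,P3}" and
    "\<psi> {E3,P1} = -\<psi> {E1,P3}" and
    "\<psi> {E4,P2} = -\<psi> {E1,P3}" and
    "\<psi> {E2,P1} = -\<psi> {E1,P2}" and
    "\<psi> {E3,P4} = -\<psi> {E1,P2}" and
    "\<psi> {E4,P3} = \<psi> {E1,P2}" and
    "\<psi> {E2,P2} = \<psi> {E1,P1}" and
    "\<psi> {E3,P3} = \<psi> {E1,P1}" and
    "\<psi> {E4,P4} = \<psi> {E1,P1}" and
    "\<psi> {E2,E3} = \<psi> {E1,E4}" and
    "\<psi> {P1,P4} = -\<psi> {E1,E4}" and
    "\<psi> {P2,P3} = -\<psi> {E1,E4}" and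
    "\<psi> {E2,E4} = -\<psi> {E1,E3}" and
    "\<psi> {P1,P3} = -\<psi> {E1,E3}" and
    "\<psi> {P2,P4} = \<psi> {E1,E3}" and
    "\<psi> {E3,E4} = \<psi> {E1,E2}" and
    "\<psi> {P1,P2} = -\<psi> {E1,E2}" and
    "\<psi> {P3,P4} = -\<psi> {E1,E2}"
  and "card U = 2"
  shows "PP (\<lambda>V. swedge (ev P2) (intprod E1 \<psi>) V + swedge (ev E1) (intprod P2 \<psi>) V) U = 0"
  using assms(22)
  apply (rule pairs_cases[where P="\<lambda>U. PP _ U = _"])
  apply (simp_all add: PP_def tab sw_ev_pair intprod_single sgn1_def ins_sort assms(1-21))
  done


lemma line_deriv:
  fixes u :: "'a::real_normed_vector \<Rightarrow> real"
  assumes d: "\<And>q. (u has_derivative Du q) (at q)"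
  shows "((\<lambda>s. u (w + s *\<^sub>R v)) has_real_derivative Du (w + s *\<^sub>R v) v) (at s)"
proof -
  have g: "((\<lambda>s. w + s *\<^sub>R v) has_derivative (\<lambda>h. h *\<^sub>R v)) (at s)"
    by (auto intro!: derivative_eq_intros)
  have c: "((\<lambda>s. u (w + s *\<^sub>R v)) has_derivative (\<lambda>h. Du (w + s *\<^sub>R v) (h *\<^sub>R v))) (at s)"
    using diff_chain_at[OF g d[of "w + s *\<^sub>R v"]] by (simp add: o_def)
  have bl: "bounded_linear (Du (w + s *\<^sub>R v))" using d has_derivative_bounded_linear by blast
  have "(\<lambda>h. Du (w + s *\<^sub>R v) (h *\<^sub>R v)) = (*) (Du (w + s *\<^sub>R v) v)"
    using linear_cmul[OF bounded_linear.linear[OF bl]] by (auto simp: fun_eq_iff)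
  then show ?thesis using c by (simp add: has_field_derivative_def)
qed

lemma schwarz_step:
  fixes u :: "'a::real_normed_vector \<Rightarrow> real"
  assumes d1: "\<And>q. (u has_derivative Du q) (at q)"
    and d2: "\<And>q. ((\<lambda>q. Du q va) has_derivative Da q) (at q)"
    and t: "t > 0"
  shows "\<exists>\<sigma> \<tau>. 0 < \<sigma> \<and> \<sigma> < t \<and> 0 < \<tau> \<and> \<tau> < t \<and>
     u (p + t *\<^sub>R va + t *\<^sub>R vb) - u (p + t *\<^sub>R va) - u (p + t *\<^sub>R vb) + u p
       = t * t * Da (p + \<sigma> *\<^sub>R va + \<tau> *\<^sub>R vb) vb"
proof -
  define g where "g s = u ((p + t *\<^sub>R vb) + s *\<^sub>R va) - u (p + s *\<^sub>R va)" for s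
  have dg: "(g has_real_derivative (Du ((p + t *\<^sub>R vb) + s *\<^sub>R va) va - Du (p + s *\<^sub>R va) va)) (at s)" for s
    unfolding g_def by (intro derivative_intros line_deriv[OF d1])
  obtain \<sigma> where s: "0 < \<sigma>" "\<sigma> < t" "g t - g 0 = (t - 0) * (Du ((p + t *\<^sub>R vb) + \<sigma> *\<^sub>R va) va - Du (p + \<sigma> *\<^sub>R va) va)"
    using MVT2[OF t, of g "\<lambda>s. Du ((p + t *\<^sub>R vb) + s *\<^sub>R va) va - Du (p + s *\<^sub>R va) va"] dg by blast
  define k where "k r = Du ((p + \<sigma> *\<^sub>R va) + r *\<^sub>R vb) va" for r
  have dk: "(k has_real_derivative Da ((p + \<sigma> *\<^sub>R va) + r *\<^sub>R vb) vb) (at r)" for r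
    unfolding k_def by (rule line_deriv[where u="\<lambda>q. Du q va", OF d2])
  obtain \<tau> where r: "0 < \<tau>" "\<tau> < t" "k t - k 0 = (t - 0) * Da ((p + \<sigma> *\<^sub>R va) + \<tau> *\<^sub>R vb) vb"
    using MVT2[OF t, of k "\<lambda>r. Da ((p + \<sigma> *\<^sub>R va) + r *\<^sub>R vb) vb"] dk by blast
  have e1: "(p + t *\<^sub>R vb) + \<sigma> *\<^sub>R va = (p + \<sigma> *\<^sub>R va) + t *\<^sub>R vb" by (simp add: algebra_simps)
  have "Du ((p + t *\<^sub>R vb) + \<sigma> *\<^sub>R va) va - Du (p + \<sigma> *\<^sub>R va) va = k t - k 0"
    unfolding k_def e1 by simp
  have e2: "(p + t *\<^sub>R vb) + t *\<^sub>R va = p + t *\<^sub>R va + t *\<^sub>R vb" by (simp add: algebra_simps)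
  have "u (p + t *\<^sub>R va + t *\<^sub>R vb) - u (p + t *\<^sub>R va) - u (p + t *\<^sub>R vb) + u p = g t - g 0"
    unfolding g_def e2 by simp
  also have "\<dots> = t * t * Da (p + \<sigma> *\<^sub>R va + \<tau> *\<^sub>R vb) vb"
    using s(3) r(3) unfolding k_def e1 by simp
  finally show ?thesis using s r by blast
qed

lemma schwarz:
  fixes u :: "'a::real_normed_vector \<Rightarrow> real"
  assumes d1: "\<And>q. (u has_derivative Du q) (at q)"
    and d2a: "\<And>q. ((\<lambda>q. Du q va) has_derivative Da q) (at q)"
    and d2b: "\<And>q. ((\<lambda>q. Du q vb) has_derivative Db q) (at q)"
    and ca: "continuous_on UNIV (\<lambda>q. Da q vb)"
    and cb: "continuous_on UNIV (\<lambda>q. Db q va)"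
  shows "Da p vb = Db p va"
proof (rule ccontr)
  assume ne: "Da p vb \<noteq> Db p va"
  define e where "e = \<bar>Da p vb - Db p va\<bar> / 2"
  have e: "e > 0" using ne by (simp add: e_def)
  obtain dl1 where dl1: "dl1 > 0" "\<And>q. dist q p < dl1 \<Longrightarrow> dist (Da q vb) (Da p vb) < e"
    using ca e unfolding continuous_on_iff by blast
  obtain dl2 where dl2: "dl2 > 0" "\<And>q. dist q p < dl2 \<Longrightarrow> dist (Db q va) (Db p va) < e"
    using cb e unfolding continuous_on_iff by blast
  define M where "M = norm va + norm vb + 1"
  have M: "M > 0" unfolding M_def by (simp add: add_nonneg_pos)
  define t where "t = min dl1 dl2 / M"
  have t: "t > 0" using dl1 dl2 M by (simp add: t_def)
  have tM: "t * M \<le> dl1" "t * M \<le> dl2" using M by (simp_all add: t_def)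
  have close: "dist (p + a *\<^sub>R v + b *\<^sub>R w) p < t * M" if "0 < a" "a < t" "0 < b" "b < t"
     and vw: "norm v + norm w + 1 = M" for a b v w
  proof -
    have "dist (p + a *\<^sub>R v + b *\<^sub>R w) p = norm (a *\<^sub>R v + b *\<^sub>R w)" by (simp add: dist_norm)
    also have "\<dots> \<le> a * norm v + b * norm w"
      using that by (metis abs_of_pos norm_scaleR norm_triangle_ineq)
    also have "\<dots> \<le> t * norm v + t * norm w"
      using that by (intro add_mono mult_right_mono) auto
    also have "\<dots> < t * M"
    proof -
      have "t * M = t * norm v + t * norm w + t" by (simp add: vw[symmetric] algebra_simps)
      then show ?thesis using t by linarith
    qed
    finally show ?thesis .
  qed
  obtain s1 r1 where sr1: "0 < s1" "s1 < t" "0 < r1" "r1 < t"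
     "u (p + t *\<^sub>R va + t *\<^sub>R vb) - u (p + t *\<^sub>R va) - u (p + t *\<^sub>R vb) + u p
       = t * t * Da (p + s1 *\<^sub>R va + r1 *\<^sub>R vb) vb"
    using schwarz_step[OF d1 d2a t] by blast
  obtain s2 r2 where sr2: "0 < s2" "s2 < t" "0 < r2" "r2 < t"
     "u (p + t *\<^sub>R vb + t *\<^sub>R va) - u (p + t *\<^sub>R vb) - u (p + t *\<^sub>R va) + u p
       = t * t * Db (p + s2 *\<^sub>R vb + r2 *\<^sub>R va) va"
    using schwarz_step[OF d1 d2b t] by blast
  have pe: "p + t *\<^sub>R vb + t *\<^sub>R va = p + t *\<^sub>R va + t *\<^sub>R vb" by (simp add: algebra_simps)
  have "t * t * Da (p + s1 *\<^sub>R va + r1 *\<^sub>R vb) vb = t * t * Db (p + s2 *\<^sub>R vb + r2 *\<^sub>R va) va"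
    using sr1(5) sr2(5)[unfolded pe] by linarith
  then have eq: "Da (p + s1 *\<^sub>R va + r1 *\<^sub>R vb) vb = Db (p + s2 *\<^sub>R vb + r2 *\<^sub>R va) va"
    using t by simp
  have c1: "dist (Da (p + s1 *\<^sub>R va + r1 *\<^sub>R vb) vb) (Da p vb) < e"
    using close[OF sr1(1-4) M_def[symmetric]] tM by (intro dl1(2)) linarith
  have c2: "dist (Db (p + s2 *\<^sub>R vb + r2 *\<^sub>R va) va) (Db p va) < e"
  proof -
    have "norm vb + norm va + 1 = M" by (simp add: M_def)
    from close[OF sr2(1-4) this] tM show ?thesis by (intro dl2(2)) linarith
  qed
  have "\<bar>Da p vb - Db p va\<bar> < 2 * e" using c1 c2 eq by (simp add: dist_real_def)
  then show False by (simp add: e_def)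
qed


lemma swedge_add2: "swedge \<alpha> (\<lambda>V. f V + g V) U = swedge \<alpha> f U + swedge \<alpha> g U"
  unfolding swedge_def wedge_with_def by (simp add: scaleR_add_right sum.distrib)
lemma swedge_diff2: "swedge \<alpha> (\<lambda>V. f V - g V) U = swedge \<alpha> f U - swedge \<alpha> g U"
  unfolding swedge_def wedge_with_def by (simp add: scaleR_diff_right sum_subtractf)
lemma swedge_scale2: "swedge \<alpha> (\<lambda>V. c *\<^sub>R f V) U = c *\<^sub>R swedge \<alpha> f U"
  unfolding swedge_def wedge_with_def by (simp add: scaleR_sum_right mult_ac)
lemma swedge_sum2: "swedge \<alpha> (\<lambda>V. \<Sum>i\<in>I. f i V) U = (\<Sum>i\<in>I. swedge \<alpha> (f i) U)"
  unfolding swedge_def wedge_with_def by (simp add: scaleR_sum_right sum.swap[of _ I])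
lemma swedge_add2': "swedge \<alpha> (\<lambda>V. f V + g V) = (\<lambda>U. swedge \<alpha> f U + swedge \<alpha> g U)"
  by (rule ext) (rule swedge_add2)
lemma swedge_scale2': "swedge \<alpha> (\<lambda>V. c *\<^sub>R f V) = (\<lambda>U. c *\<^sub>R swedge \<alpha> f U)"
  by (rule ext) (rule swedge_scale2)
lemma swedge_sum2': "swedge \<alpha> (\<lambda>V. \<Sum>i\<in>I. f i V) = (\<lambda>U. \<Sum>i\<in>I. swedge \<alpha> (f i) U)"
  by (rule ext) (rule swedge_sum2)
lemma swedge_lin:
  assumes "bounded_linear h"
  shows "h (swedge \<alpha> f U) = swedge \<alpha> (\<lambda>V. h (f V)) U"
  unfolding swedge_def wedge_with_def
  using assms by (simp add: linear_sum bounded_linear.linear linear_cmul)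

lemma star_add: "star (\<lambda>V. f V + g V) U = star f U + star g U"
  unfolding star_def by (simp add: scaleR_add_right)
lemma star_diff: "star (\<lambda>V. f V - g V) U = star f U - star g U"
  unfolding star_def by (simp add: scaleR_diff_right)
lemma star_scale: "star (\<lambda>V. c *\<^sub>R f V) U = c *\<^sub>R star f U"
  unfolding star_def by simp
lemma star_sum: "star (\<lambda>V. \<Sum>i\<in>I. f i V) U = (\<Sum>i\<in>I. star (f i) U)"
  unfolding star_def by (simp add: scaleR_sum_right)
lemma star_lin:
  assumes "bounded_linear h"
  shows "h (star f U) = star (\<lambda>V. h (f V)) U"
  unfolding star_def using assms by (simp add: bounded_linear.linear linear_cmul)

lemma intprod_add: "intprod a (\<lambda>V. f V + g V) U = intprod a f U + intprod a g U"
  unfolding intprod_def by (simp add: scaleR_add_right)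
lemma intprod_diff: "intprod a (\<lambda>V. f V - g V) U = intprod a f U - intprod a g U"
  unfolding intprod_def by (simp add: scaleR_diff_right)
lemma intprod_scale: "intprod a (\<lambda>V. c *\<^sub>R f V) U = c *\<^sub>R intprod a f U"
  unfolding intprod_def by simp
lemma intprod_sum: "intprod a (\<lambda>V. \<Sum>i\<in>I. f i V) U = (\<Sum>i\<in>I. intprod a (f i) U)"
  unfolding intprod_def by (simp add: scaleR_sum_right)
lemma intprod_lin:
  assumes "bounded_linear h"
  shows "h (intprod a f U) = intprod a (\<lambda>V. h (f V)) U"
  unfolding intprod_def using assms by (simp add: bounded_linear.linear linear_cmul linear_0)

lemma PP_add: "PP (\<lambda>V. f V + g V) U = PP f U + PP g U"
  unfolding PP_def by (simp add: swedge_add2' star_add scaleR_add_right algebra_simps)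
lemma PP_scale: "PP (\<lambda>V. c *\<^sub>R f V) U = c *\<^sub>R PP f U"
  unfolding PP_def by (simp add: swedge_scale2' star_scale scaleR_add_right)
lemma PP_sum: "PP (\<lambda>V. \<Sum>i\<in>I. f i V) U = (\<Sum>i\<in>I. PP (f i) U)"
  unfolding PP_def by (simp add: swedge_sum2' star_sum scaleR_sum_right sum.distrib scaleR_add_right)
lemma PP_lin:
  assumes "bounded_linear h"
  shows "h (PP f U) = PP (\<lambda>V. h (f V)) U"
  unfolding PP_def using assms
  by (simp add: bounded_linear.linear linear_cmul linear_add swedge_lin star_lin)

lemma Pplus_PP: "Pplus = PP"
  by (intro ext) (simp add: Pplus_def PP_def)

lemma mm_add_l: "((A::gmat) + B) ** C = A ** C + B ** C"
  by (simp add: matrix_matrix_mult_def vec_eq_iff sum.distrib algebra_simps)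
lemma mm_add_r: "(A::gmat) ** (B + C) = A ** B + A ** C"
  by (simp add: matrix_matrix_mult_def vec_eq_iff sum.distrib algebra_simps)
lemma mm_scale_l: "((c *\<^sub>R A)::gmat) ** B = c *\<^sub>R (A ** B)"
  by (simp add: matrix_matrix_mult_def vec_eq_iff sum_distrib_left algebra_simps)
lemma mm_scale_r: "(A::gmat) ** (c *\<^sub>R B) = c *\<^sub>R (A ** B)"
  by (simp add: matrix_matrix_mult_def vec_eq_iff sum_distrib_left algebra_simps)

lemma mm_diff_l: "((A::gmat) - B) ** C = A ** C - B ** C"
  by (simp add: matrix_matrix_mult_def vec_eq_iff sum_subtractf algebra_simps)
lemma mm_diff_r: "(A::gmat) ** (B - C) = A ** B - A ** C"
  by (simp add: matrix_matrix_mult_def vec_eq_iff sum_subtractf algebra_simps)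

lemma bilinear_gbr: "bilinear gbr"
  unfolding bilinear_def gbr_def
  by (auto intro!: linearI simp: mm_add_l mm_add_r mm_scale_l mm_scale_r algebra_simps)

lemma bb_gbr: "bounded_bilinear gbr"
  using bilinear_gbr bilinear_conv_bounded_bilinear by blast

lemma bl_gbr: "bounded_linear (gbr X)"
  using bounded_bilinear.bounded_linear_right[OF bb_gbr] .

lemmas gbr_add2 = bounded_bilinear.add_right[OF bb_gbr]
lemmas gbr_add1 = bounded_bilinear.add_left[OF bb_gbr]
lemmas gbr_diff2 = bounded_bilinear.diff_right[OF bb_gbr]
lemmas gbr_diff1 = bounded_bilinear.diff_left[OF bb_gbr]
lemmas gbr_scale2 = bounded_bilinear.scaleR_right[OF bb_gbr]
lemmas gbr_scale1 = bounded_bilinear.scaleR_left[OF bb_gbr]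
lemmas gbr_zero2 = bounded_bilinear.zero_right[OF bb_gbr]
lemmas gbr_zero1 = bounded_bilinear.zero_left[OF bb_gbr]
lemmas gbr_minus2 = bounded_bilinear.minus_right[OF bb_gbr]
lemmas gbr_minus1 = bounded_bilinear.minus_left[OF bb_gbr]
lemmas gbr_sum2 = bounded_bilinear.sum_right[OF bb_gbr]
lemmas gbr_sum1 = bounded_bilinear.sum_left[OF bb_gbr]

lemma gbr_anti: "gbr X Y = - gbr Y X"
  unfolding gbr_def by simp

lemma gbr_jacobi: "gbr X (gbr Y Z) - gbr Y (gbr X Z) = gbr (gbr X Y) Z"
  unfolding gbr_def
  by (simp add: mm_diff_l mm_diff_r matrix_mul_assoc algebra_simps)


definition L2 :: "(ix set \<Rightarrow> 'v::real_vector) \<Rightarrow> bool" where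
  "L2 \<psi> = (is_two_form \<psi> \<and> (\<forall>U. 3 *\<^sub>R \<psi> U - star (swedge Omega \<psi>) U = 0))"

lemma in_L2: "in_Lambda2plus = L2"
  by (intro ext) (simp add: in_Lambda2plus_def L2_def)

definition sw :: "ix \<Rightarrow> ix \<Rightarrow> (ix set \<Rightarrow> 'v::real_vector) \<Rightarrow> ix set \<Rightarrow> 'v" where
  "sw k l \<psi> V = swedge (ev k) (intprod l \<psi>) V"

definition Yi :: "(ix set \<Rightarrow> 'v::real_vector) \<Rightarrow> ix set \<Rightarrow> 'v" where
  "Yi \<psi> V = sw P1 P2 \<psi> V - sw P2 P1 \<psi> V - sw P3 P4 \<psi> V + sw P4 P3 \<psi> V"
definition Yj :: "(ix set \<Rightarrow> 'v::real_vector) \<Rightarrow> ix set \<Rightarrow> 'v" where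
  "Yj \<psi> V = sw P1 P3 \<psi> V - sw P3 P1 \<psi> V + sw P2 P4 \<psi> V - sw P4 P2 \<psi> V"
definition Yk :: "(ix set \<Rightarrow> 'v::real_vector) \<Rightarrow> ix set \<Rightarrow> 'v" where
  "Yk \<psi> V = sw P1 P4 \<psi> V - sw P4 P1 \<psi> V - sw P2 P3 \<psi> V + sw P3 P2 \<psi> V"

lemma PP_comm: "PP (\<lambda>V. f V + g V) U = PP (\<lambda>V. g V + f V) U"
  by (simp add: add.commute)

lemma L2_real_rel:
  fixes \<psi> :: "ix set \<Rightarrow> real"
  assumes "L2 \<psi>"
  shows "\<forall>U. 3 * \<psi> U - star (swedge Omega \<psi>) U = 0"
  using assms by (simp add: L2_def)

lemma R1_E1_E1:
  fixes \<psi> :: "ix set \<Rightarrow> real"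
  assumes L: "L2 \<psi>" and c: "card U = 2"
  shows "PP (\<lambda>V. swedge (ev E1) (intprod E1 \<psi>) V + swedge (ev E1) (intprod E1 \<psi>) V) U = \<psi> U / 2"
    "PP (\<lambda>V. swedge (ev E1) (intprod E1 \<psi>) V + swedge (ev E1) (intprod E1 \<psi>) V) U = \<psi> U / 2"
proof -
  note r = L2_rel[OF L2_real_rel[OF L]]
  show 1: "PP (\<lambda>V. swedge (ev E1) (intprod E1 \<psi>) V + swedge (ev E1) (intprod E1 \<psi>) V) U = \<psi> U / 2"
    using c
    apply (rule pairs_cases[where P="\<lambda>U. PP (\<lambda>V. swedge (ev E1) (intprod E1 \<psi>) V + swedge (ev E1) (intprod E1 \<psi>) V) U = \<psi> U / 2"])
    apply (simp_all add: PP_def tab sw_ev_pair intprod_single sgn1_def ins_sort r)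
    done
  show "PP (\<lambda>V. swedge (ev E1) (intprod E1 \<psi>) V + swedge (ev E1) (intprod E1 \<psi>) V) U = \<psi> U / 2"
    using 1 PP_comm by metis
qed

lemma R1_E1_E2:
  fixes \<psi> :: "ix set \<Rightarrow> real"
  assumes L: "L2 \<psi>" and c: "card U = 2"
  shows "PP (\<lambda>V. swedge (ev E2) (intprod E1 \<psi>) V + swedge (ev E1) (intprod E2 \<psi>) V) U = 0"
    "PP (\<lambda>V. swedge (ev E1) (intprod E2 \<psi>) V + swedge (ev E2) (intprod E1 \<psi>) V) U = 0"
proof -
  note r = L2_rel[OF L2_real_rel[OF L]]
  show 1: "PP (\<lambda>V. swedge (ev E2) (intprod E1 \<psi>) V + swedge (ev E1) (intprod E2 \<psi>) V) U = 0"
    using c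
    apply (rule pairs_cases[where P="\<lambda>U. PP (\<lambda>V. swedge (ev E2) (intprod E1 \<psi>) V + swedge (ev E1) (intprod E2 \<psi>) V) U = 0"])
    apply (simp_all add: PP_def tab sw_ev_pair intprod_single sgn1_def ins_sort r)
    done
  show "PP (\<lambda>V. swedge (ev E1) (intprod E2 \<psi>) V + swedge (ev E2) (intprod E1 \<psi>) V) U = 0"
    using 1 PP_comm by metis
qed

lemma R1_E1_E3:
  fixes \<psi> :: "ix set \<Rightarrow> real"
  assumes L: "L2 \<psi>" and c: "card U = 2"
  shows "PP (\<lambda>V. swedge (ev E3) (intprod E1 \<psi>) V + swedge (ev E1) (intprod E3 \<psi>) V) U = 0"
    "PP (\<lambda>V. swedge (ev E1) (intprod E3 \<psi>) V + swedge (ev E3) (intprod E1 \<psi>) V) U = 0"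
proof -
  note r = L2_rel[OF L2_real_rel[OF L]]
  show 1: "PP (\<lambda>V. swedge (ev E3) (intprod E1 \<psi>) V + swedge (ev E1) (intprod E3 \<psi>) V) U = 0"
    using c
    apply (rule pairs_cases[where P="\<lambda>U. PP (\<lambda>V. swedge (ev E3) (intprod E1 \<psi>) V + swedge (ev E1) (intprod E3 \<psi>) V) U = 0"])
    apply (simp_all add: PP_def tab sw_ev_pair intprod_single sgn1_def ins_sort r)
    done
  show "PP (\<lambda>V. swedge (ev E1) (intprod E3 \<psi>) V + swedge (ev E3) (intprod E1 \<psi>) V) U = 0"
    using 1 PP_comm by metis
qed

lemma R1_E1_E4:
  fixes \<psi> :: "ix set \<Rightarrow> real"
  assumes L: "L2 \<psi>" and c: "card U = 2"
  shows "PP (\<lambda>V. swedge (ev E4) (intprod E1 \<psi>) V + swedge (ev E1) (intprod E4 \<psi>) V) U = 0"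
    "PP (\<lambda>V. swedge (ev E1) (intprod E4 \<psi>) V + swedge (ev E4) (intprod E1 \<psi>) V) U = 0"
proof -
  note r = L2_rel[OF L2_real_rel[OF L]]
  show 1: "PP (\<lambda>V. swedge (ev E4) (intprod E1 \<psi>) V + swedge (ev E1) (intprod E4 \<psi>) V) U = 0"
    using c
    apply (rule pairs_cases[where P="\<lambda>U. PP (\<lambda>V. swedge (ev E4) (intprod E1 \<psi>) V + swedge (ev E1) (intprod E4 \<psi>) V) U = 0"])
    apply (simp_all add: PP_def tab sw_ev_pair intprod_single sgn1_def ins_sort r)
    done
  show "PP (\<lambda>V. swedge (ev E1) (intprod E4 \<psi>) V + swedge (ev E4) (intprod E1 \<psi>) V) U = 0"
    using 1 PP_comm by metis
qed

lemma R1_E1_P1: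
  fixes \<psi> :: "ix set \<Rightarrow> real"
  assumes L: "L2 \<psi>" and c: "card U = 2"
  shows "PP (\<lambda>V. swedge (ev P1) (intprod E1 \<psi>) V + swedge (ev E1) (intprod P1 \<psi>) V) U = 0"
    "PP (\<lambda>V. swedge (ev E1) (intprod P1 \<psi>) V + swedge (ev P1) (intprod E1 \<psi>) V) U = 0"
proof -
  note r = L2_rel[OF L2_real_rel[OF L]]
  show 1: "PP (\<lambda>V. swedge (ev P1) (intprod E1 \<psi>) V + swedge (ev E1) (intprod P1 \<psi>) V) U = 0"
    using c
    apply (rule pairs_cases[where P="\<lambda>U. PP (\<lambda>V. swedge (ev P1) (intprod E1 \<psi>) V + swedge (ev E1) (intprod P1 \<psi>) V) U = 0"])
    apply (simp_all add: PP_def tab sw_ev_pair intprod_single sgn1_def ins_sort r)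
    done
  show "PP (\<lambda>V. swedge (ev E1) (intprod P1 \<psi>) V + swedge (ev P1) (intprod E1 \<psi>) V) U = 0"
    using 1 PP_comm by metis
qed

lemma R1_E1_P2:
  fixes \<psi> :: "ix set \<Rightarrow> real"
  assumes L: "L2 \<psi>" and c: "card U = 2"
  shows "PP (\<lambda>V. swedge (ev P2) (intprod E1 \<psi>) V + swedge (ev E1) (intprod P2 \<psi>) V) U = 0"
    "PP (\<lambda>V. swedge (ev E1) (intprod P2 \<psi>) V + swedge (ev P2) (intprod E1 \<psi>) V) U = 0"
proof -
  note r = L2_rel[OF L2_real_rel[OF L]]
  show 1: "PP (\<lambda>V. swedge (ev P2) (intprod E1 \<psi>) V + swedge (ev E1) (intprod P2 \<psi>) V) U = 0"
    using c
    apply (rule pairs_cases[where P="\<lambda>U. PP (\<lambda>V. swedge (ev P2) (intprod E1 \<psi>) V + swedge (ev E1) (intprod P2 \<psi>) V) U = 0"])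
    apply (simp_all add: PP_def tab sw_ev_pair intprod_single sgn1_def ins_sort r)
    done
  show "PP (\<lambda>V. swedge (ev E1) (intprod P2 \<psi>) V + swedge (ev P2) (intprod E1 \<psi>) V) U = 0"
    using 1 PP_comm by metis
qed

lemma R1_E1_P3:
  fixes \<psi> :: "ix set \<Rightarrow> real"
  assumes L: "L2 \<psi>" and c: "card U = 2"
  shows "PP (\<lambda>V. swedge (ev P3) (intprod E1 \<psi>) V + swedge (ev E1) (intprod P3 \<psi>) V) U = 0"
    "PP (\<lambda>V. swedge (ev E1) (intprod P3 \<psi>) V + swedge (ev P3) (intprod E1 \<psi>) V) U = 0"
proof -
  note r = L2_rel[OF L2_real_rel[OF L]]
  show 1: "PP (\<lambda>V. swedge (ev P3) (intprod E1 \<psi>) V + swedge (ev E1) (intprod P3 \<psi>) V) U = 0"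
    using c
    apply (rule pairs_cases[where P="\<lambda>U. PP (\<lambda>V. swedge (ev P3) (intprod E1 \<psi>) V + swedge (ev E1) (intprod P3 \<psi>) V) U = 0"])
    apply (simp_all add: PP_def tab sw_ev_pair intprod_single sgn1_def ins_sort r)
    done
  show "PP (\<lambda>V. swedge (ev E1) (intprod P3 \<psi>) V + swedge (ev P3) (intprod E1 \<psi>) V) U = 0"
    using 1 PP_comm by metis
qed

lemma R1_E1_P4:
  fixes \<psi> :: "ix set \<Rightarrow> real"
  assumes L: "L2 \<psi>" and c: "card U = 2"
  shows "PP (\<lambda>V. swedge (ev P4) (intprod E1 \<psi>) V + swedge (ev E1) (intprod P4 \<psi>) V) U = 0"
    "PP (\<lambda>V. swedge (ev E1) (intprod P4 \<psi>) V + swedge (ev P4) (intprod E1 \<psi>) V) U = 0"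
proof -
  note r = L2_rel[OF L2_real_rel[OF L]]
  show 1: "PP (\<lambda>V. swedge (ev P4) (intprod E1 \<psi>) V + swedge (ev E1) (intprod P4 \<psi>) V) U = 0"
    using c
    apply (rule pairs_cases[where P="\<lambda>U. PP (\<lambda>V. swedge (ev P4) (intprod E1 \<psi>) V + swedge (ev E1) (intprod P4 \<psi>) V) U = 0"])
    apply (simp_all add: PP_def tab sw_ev_pair intprod_single sgn1_def ins_sort r)
    done
  show "PP (\<lambda>V. swedge (ev E1) (intprod P4 \<psi>) V + swedge (ev P4) (intprod E1 \<psi>) V) U = 0"
    using 1 PP_comm by metis
qed

lemma R1_E2_E2:
  fixes \<psi> :: "ix set \<Rightarrow> real"
  assumes L: "L2 \<psi>" and c: "card U = 2"
  shows "PP (\<lambda>V. swedge (ev E2) (intprod E2 \<psi>) V + swedge (ev E2) (intprod E2 \<psi>) V) U = \<psi> U / 2"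
    "PP (\<lambda>V. swedge (ev E2) (intprod E2 \<psi>) V + swedge (ev E2) (intprod E2 \<psi>) V) U = \<psi> U / 2"
proof -
  note r = L2_rel[OF L2_real_rel[OF L]]
  show 1: "PP (\<lambda>V. swedge (ev E2) (intprod E2 \<psi>) V + swedge (ev E2) (intprod E2 \<psi>) V) U = \<psi> U / 2"
    using c
    apply (rule pairs_cases[where P="\<lambda>U. PP (\<lambda>V. swedge (ev E2) (intprod E2 \<psi>) V + swedge (ev E2) (intprod E2 \<psi>) V) U = \<psi> U / 2"])
    apply (simp_all add: PP_def tab sw_ev_pair intprod_single sgn1_def ins_sort r)
    done
  show "PP (\<lambda>V. swedge (ev E2) (intprod E2 \<psi>) V + swedge (ev E2) (intprod E2 \<psi>) V) U = \<psi> U / 2"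
    using 1 PP_comm by metis
qed

lemma R1_E2_E3:
  fixes \<psi> :: "ix set \<Rightarrow> real"
  assumes L: "L2 \<psi>" and c: "card U = 2"
  shows "PP (\<lambda>V. swedge (ev E3) (intprod E2 \<psi>) V + swedge (ev E2) (intprod E3 \<psi>) V) U = 0"
    "PP (\<lambda>V. swedge (ev E2) (intprod E3 \<psi>) V + swedge (ev E3) (intprod E2 \<psi>) V) U = 0"
proof -
  note r = L2_rel[OF L2_real_rel[OF L]]
  show 1: "PP (\<lambda>V. swedge (ev E3) (intprod E2 \<psi>) V + swedge (ev E2) (intprod E3 \<psi>) V) U = 0"
    using c
    apply (rule pairs_cases[where P="\<lambda>U. PP (\<lambda>V. swedge (ev E3) (intprod E2 \<psi>) V + swedge (ev E2) (intprod E3 \<psi>) V) U = 0"])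
    apply (simp_all add: PP_def tab sw_ev_pair intprod_single sgn1_def ins_sort r)
    done
  show "PP (\<lambda>V. swedge (ev E2) (intprod E3 \<psi>) V + swedge (ev E3) (intprod E2 \<psi>) V) U = 0"
    using 1 PP_comm by metis
qed

lemma R1_E2_E4:
  fixes \<psi> :: "ix set \<Rightarrow> real"
  assumes L: "L2 \<psi>" and c: "card U = 2"
  shows "PP (\<lambda>V. swedge (ev E4) (intprod E2 \<psi>) V + swedge (ev E2) (intprod E4 \<psi>) V) U = 0"
    "PP (\<lambda>V. swedge (ev E2) (intprod E4 \<psi>) V + swedge (ev E4) (intprod E2 \<psi>) V) U = 0"
proof -
  note r = L2_rel[OF L2_real_rel[OF L]]
  show 1: "PP (\<lambda>V. swedge (ev E4) (intprod E2 \<psi>) V + swedge (ev E2) (intprod E4 \<psi>) V) U = 0"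
    using c
    apply (rule pairs_cases[where P="\<lambda>U. PP (\<lambda>V. swedge (ev E4) (intprod E2 \<psi>) V + swedge (ev E2) (intprod E4 \<psi>) V) U = 0"])
    apply (simp_all add: PP_def tab sw_ev_pair intprod_single sgn1_def ins_sort r)
    done
  show "PP (\<lambda>V. swedge (ev E2) (intprod E4 \<psi>) V + swedge (ev E4) (intprod E2 \<psi>) V) U = 0"
    using 1 PP_comm by metis
qed

lemma R1_E2_P1:
  fixes \<psi> :: "ix set \<Rightarrow> real"
  assumes L: "L2 \<psi>" and c: "card U = 2"
  shows "PP (\<lambda>V. swedge (ev P1) (intprod E2 \<psi>) V + swedge (ev E2) (intprod P1 \<psi>) V) U = 0"
    "PP (\<lambda>V. swedge (ev E2) (intprod P1 \<psi>) V + swedge (ev P1) (intprod E2 \<psi>) V) U = 0"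
proof -
  note r = L2_rel[OF L2_real_rel[OF L]]
  show 1: "PP (\<lambda>V. swedge (ev P1) (intprod E2 \<psi>) V + swedge (ev E2) (intprod P1 \<psi>) V) U = 0"
    using c
    apply (rule pairs_cases[where P="\<lambda>U. PP (\<lambda>V. swedge (ev P1) (intprod E2 \<psi>) V + swedge (ev E2) (intprod P1 \<psi>) V) U = 0"])
    apply (simp_all add: PP_def tab sw_ev_pair intprod_single sgn1_def ins_sort r)
    done
  show "PP (\<lambda>V. swedge (ev E2) (intprod P1 \<psi>) V + swedge (ev P1) (intprod E2 \<psi>) V) U = 0"
    using 1 PP_comm by metis
qed

lemma R1_E2_P2:
  fixes \<psi> :: "ix set \<Rightarrow> real"
  assumes L: "L2 \<psi>" and c: "card U = 2"
  shows "PP (\<lambda>V. swedge (ev P2) (intprod E2 \<psi>) V + swedge (ev E2) (intprod P2 \<psi>) V) U = 0"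
    "PP (\<lambda>V. swedge (ev E2) (intprod P2 \<psi>) V + swedge (ev P2) (intprod E2 \<psi>) V) U = 0"
proof -
  note r = L2_rel[OF L2_real_rel[OF L]]
  show 1: "PP (\<lambda>V. swedge (ev P2) (intprod E2 \<psi>) V + swedge (ev E2) (intprod P2 \<psi>) V) U = 0"
    using c
    apply (rule pairs_cases[where P="\<lambda>U. PP (\<lambda>V. swedge (ev P2) (intprod E2 \<psi>) V + swedge (ev E2) (intprod P2 \<psi>) V) U = 0"])
    apply (simp_all add: PP_def tab sw_ev_pair intprod_single sgn1_def ins_sort r)
    done
  show "PP (\<lambda>V. swedge (ev E2) (intprod P2 \<psi>) V + swedge (ev P2) (intprod E2 \<psi>) V) U = 0"
    using 1 PP_comm by metis
qed

lemma R1_E2_P3: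
  fixes \<psi> :: "ix set \<Rightarrow> real"
  assumes L: "L2 \<psi>" and c: "card U = 2"
  shows "PP (\<lambda>V. swedge (ev P3) (intprod E2 \<psi>) V + swedge (ev E2) (intprod P3 \<psi>) V) U = 0"
    "PP (\<lambda>V. swedge (ev E2) (intprod P3 \<psi>) V + swedge (ev P3) (intprod E2 \<psi>) V) U = 0"
proof -
  note r = L2_rel[OF L2_real_rel[OF L]]
  show 1: "PP (\<lambda>V. swedge (ev P3) (intprod E2 \<psi>) V + swedge (ev E2) (intprod P3 \<psi>) V) U = 0"
    using c
    apply (rule pairs_cases[where P="\<lambda>U. PP (\<lambda>V. swedge (ev P3) (intprod E2 \<psi>) V + swedge (ev E2) (intprod P3 \<psi>) V) U = 0"])
    apply (simp_all add: PP_def tab sw_ev_pair intprod_single sgn1_def ins_sort r)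
    done
  show "PP (\<lambda>V. swedge (ev E2) (intprod P3 \<psi>) V + swedge (ev P3) (intprod E2 \<psi>) V) U = 0"
    using 1 PP_comm by metis
qed

lemma R1_E2_P4:
  fixes \<psi> :: "ix set \<Rightarrow> real"
  assumes L: "L2 \<psi>" and c: "card U = 2"
  shows "PP (\<lambda>V. swedge (ev P4) (intprod E2 \<psi>) V + swedge (ev E2) (intprod P4 \<psi>) V) U = 0"
    "PP (\<lambda>V. swedge (ev E2) (intprod P4 \<psi>) V + swedge (ev P4) (intprod E2 \<psi>) V) U = 0"
proof -
  note r = L2_rel[OF L2_real_rel[OF L]]
  show 1: "PP (\<lambda>V. swedge (ev P4) (intprod E2 \<psi>) V + swedge (ev E2) (intprod P4 \<psi>) V) U = 0"
    using c
    apply (rule pairs_cases[where P="\<lambda>U. PP (\<lambda>V. swedge (ev P4) (intprod E2 \<psi>) V + swedge (ev E2) (intprod P4 \<psi>) V) U = 0"])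
    apply (simp_all add: PP_def tab sw_ev_pair intprod_single sgn1_def ins_sort r)
    done
  show "PP (\<lambda>V. swedge (ev E2) (intprod P4 \<psi>) V + swedge (ev P4) (intprod E2 \<psi>) V) U = 0"
    using 1 PP_comm by metis
qed

lemma R1_E3_E3:
  fixes \<psi> :: "ix set \<Rightarrow> real"
  assumes L: "L2 \<psi>" and c: "card U = 2"
  shows "PP (\<lambda>V. swedge (ev E3) (intprod E3 \<psi>) V + swedge (ev E3) (intprod E3 \<psi>) V) U = \<psi> U / 2"
    "PP (\<lambda>V. swedge (ev E3) (intprod E3 \<psi>) V + swedge (ev E3) (intprod E3 \<psi>) V) U = \<psi> U / 2"
proof -
  note r = L2_rel[OF L2_real_rel[OF L]]
  show 1: "PP (\<lambda>V. swedge (ev E3) (intprod E3 \<psi>) V + swedge (ev E3) (intprod E3 \<psi>) V) U = \<psi> U / 2"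
    using c
    apply (rule pairs_cases[where P="\<lambda>U. PP (\<lambda>V. swedge (ev E3) (intprod E3 \<psi>) V + swedge (ev E3) (intprod E3 \<psi>) V) U = \<psi> U / 2"])
    apply (simp_all add: PP_def tab sw_ev_pair intprod_single sgn1_def ins_sort r)
    done
  show "PP (\<lambda>V. swedge (ev E3) (intprod E3 \<psi>) V + swedge (ev E3) (intprod E3 \<psi>) V) U = \<psi> U / 2"
    using 1 PP_comm by metis
qed

lemma R1_E3_E4:
  fixes \<psi> :: "ix set \<Rightarrow> real"
  assumes L: "L2 \<psi>" and c: "card U = 2"
  shows "PP (\<lambda>V. swedge (ev E4) (intprod E3 \<psi>) V + swedge (ev E3) (intprod E4 \<psi>) V) U = 0"
    "PP (\<lambda>V. swedge (ev E3) (intprod E4 \<psi>) V + swedge (ev E4) (intprod E3 \<psi>) V) U = 0"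
proof -
  note r = L2_rel[OF L2_real_rel[OF L]]
  show 1: "PP (\<lambda>V. swedge (ev E4) (intprod E3 \<psi>) V + swedge (ev E3) (intprod E4 \<psi>) V) U = 0"
    using c
    apply (rule pairs_cases[where P="\<lambda>U. PP (\<lambda>V. swedge (ev E4) (intprod E3 \<psi>) V + swedge (ev E3) (intprod E4 \<psi>) V) U = 0"])
    apply (simp_all add: PP_def tab sw_ev_pair intprod_single sgn1_def ins_sort r)
    done
  show "PP (\<lambda>V. swedge (ev E3) (intprod E4 \<psi>) V + swedge (ev E4) (intprod E3 \<psi>) V) U = 0"
    using 1 PP_comm by metis
qed

lemma R1_E3_P1:
  fixes \<psi> :: "ix set \<Rightarrow> real"
  assumes L: "L2 \<psi>" and c: "card U = 2"
  shows "PP (\<lambda>V. swedge (ev P1) (intprod E3 \<psi>) V + swedge (ev E3) (intprod P1 \<psi>) V) U = 0"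
    "PP (\<lambda>V. swedge (ev E3) (intprod P1 \<psi>) V + swedge (ev P1) (intprod E3 \<psi>) V) U = 0"
proof -
  note r = L2_rel[OF L2_real_rel[OF L]]
  show 1: "PP (\<lambda>V. swedge (ev P1) (intprod E3 \<psi>) V + swedge (ev E3) (intprod P1 \<psi>) V) U = 0"
    using c
    apply (rule pairs_cases[where P="\<lambda>U. PP (\<lambda>V. swedge (ev P1) (intprod E3 \<psi>) V + swedge (ev E3) (intprod P1 \<psi>) V) U = 0"])
    apply (simp_all add: PP_def tab sw_ev_pair intprod_single sgn1_def ins_sort r)
    done
  show "PP (\<lambda>V. swedge (ev E3) (intprod P1 \<psi>) V + swedge (ev P1) (intprod E3 \<psi>) V) U = 0"
    using 1 PP_comm by metis
qed

lemma R1_E3_P2: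
  fixes \<psi> :: "ix set \<Rightarrow> real"
  assumes L: "L2 \<psi>" and c: "card U = 2"
  shows "PP (\<lambda>V. swedge (ev P2) (intprod E3 \<psi>) V + swedge (ev E3) (intprod P2 \<psi>) V) U = 0"
    "PP (\<lambda>V. swedge (ev E3) (intprod P2 \<psi>) V + swedge (ev P2) (intprod E3 \<psi>) V) U = 0"
proof -
  note r = L2_rel[OF L2_real_rel[OF L]]
  show 1: "PP (\<lambda>V. swedge (ev P2) (intprod E3 \<psi>) V + swedge (ev E3) (intprod P2 \<psi>) V) U = 0"
    using c
    apply (rule pairs_cases[where P="\<lambda>U. PP (\<lambda>V. swedge (ev P2) (intprod E3 \<psi>) V + swedge (ev E3) (intprod P2 \<psi>) V) U = 0"])
    apply (simp_all add: PP_def tab sw_ev_pair intprod_single sgn1_def ins_sort r)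
    done
  show "PP (\<lambda>V. swedge (ev E3) (intprod P2 \<psi>) V + swedge (ev P2) (intprod E3 \<psi>) V) U = 0"
    using 1 PP_comm by metis
qed

lemma R1_E3_P3:
  fixes \<psi> :: "ix set \<Rightarrow> real"
  assumes L: "L2 \<psi>" and c: "card U = 2"
  shows "PP (\<lambda>V. swedge (ev P3) (intprod E3 \<psi>) V + swedge (ev E3) (intprod P3 \<psi>) V) U = 0"
    "PP (\<lambda>V. swedge (ev E3) (intprod P3 \<psi>) V + swedge (ev P3) (intprod E3 \<psi>) V) U = 0"
proof -
  note r = L2_rel[OF L2_real_rel[OF L]]
  show 1: "PP (\<lambda>V. swedge (ev P3) (intprod E3 \<psi>) V + swedge (ev E3) (intprod P3 \<psi>) V) U = 0"
    using c
    apply (rule pairs_cases[where P="\<lambda>U. PP (\<lambda>V. swedge (ev P3) (intprod E3 \<psi>) V + swedge (ev E3) (intprod P3 \<psi>) V) U = 0"])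
    apply (simp_all add: PP_def tab sw_ev_pair intprod_single sgn1_def ins_sort r)
    done
  show "PP (\<lambda>V. swedge (ev E3) (intprod P3 \<psi>) V + swedge (ev P3) (intprod E3 \<psi>) V) U = 0"
    using 1 PP_comm by metis
qed

lemma R1_E3_P4:
  fixes \<psi> :: "ix set \<Rightarrow> real"
  assumes L: "L2 \<psi>" and c: "card U = 2"
  shows "PP (\<lambda>V. swedge (ev P4) (intprod E3 \<psi>) V + swedge (ev E3) (intprod P4 \<psi>) V) U = 0"
    "PP (\<lambda>V. swedge (ev E3) (intprod P4 \<psi>) V + swedge (ev P4) (intprod E3 \<psi>) V) U = 0"
proof -
  note r = L2_rel[OF L2_real_rel[OF L]]
  show 1: "PP (\<lambda>V. swedge (ev P4) (intprod E3 \<psi>) V + swedge (ev E3) (intprod P4 \<psi>) V) U = 0"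
    using c
    apply (rule pairs_cases[where P="\<lambda>U. PP (\<lambda>V. swedge (ev P4) (intprod E3 \<psi>) V + swedge (ev E3) (intprod P4 \<psi>) V) U = 0"])
    apply (simp_all add: PP_def tab sw_ev_pair intprod_single sgn1_def ins_sort r)
    done
  show "PP (\<lambda>V. swedge (ev E3) (intprod P4 \<psi>) V + swedge (ev P4) (intprod E3 \<psi>) V) U = 0"
    using 1 PP_comm by metis
qed

lemma R1_E4_E4:
  fixes \<psi> :: "ix set \<Rightarrow> real"
  assumes L: "L2 \<psi>" and c: "card U = 2"
  shows "PP (\<lambda>V. swedge (ev E4) (intprod E4 \<psi>) V + swedge (ev E4) (intprod E4 \<psi>) V) U = \<psi> U / 2"
    "PP (\<lambda>V. swedge (ev E4) (intprod E4 \<psi>) V + swedge (ev E4) (intprod E4 \<psi>) V) U = \<psi> U / 2"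
proof -
  note r = L2_rel[OF L2_real_rel[OF L]]
  show 1: "PP (\<lambda>V. swedge (ev E4) (intprod E4 \<psi>) V + swedge (ev E4) (intprod E4 \<psi>) V) U = \<psi> U / 2"
    using c
    apply (rule pairs_cases[where P="\<lambda>U. PP (\<lambda>V. swedge (ev E4) (intprod E4 \<psi>) V + swedge (ev E4) (intprod E4 \<psi>) V) U = \<psi> U / 2"])
    apply (simp_all add: PP_def tab sw_ev_pair intprod_single sgn1_def ins_sort r)
    done
  show "PP (\<lambda>V. swedge (ev E4) (intprod E4 \<psi>) V + swedge (ev E4) (intprod E4 \<psi>) V) U = \<psi> U / 2"
    using 1 PP_comm by metis
qed

lemma R1_E4_P1:
  fixes \<psi> :: "ix set \<Rightarrow> real"
  assumes L: "L2 \<psi>" and c: "card U = 2"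
  shows "PP (\<lambda>V. swedge (ev P1) (intprod E4 \<psi>) V + swedge (ev E4) (intprod P1 \<psi>) V) U = 0"
    "PP (\<lambda>V. swedge (ev E4) (intprod P1 \<psi>) V + swedge (ev P1) (intprod E4 \<psi>) V) U = 0"
proof -
  note r = L2_rel[OF L2_real_rel[OF L]]
  show 1: "PP (\<lambda>V. swedge (ev P1) (intprod E4 \<psi>) V + swedge (ev E4) (intprod P1 \<psi>) V) U = 0"
    using c
    apply (rule pairs_cases[where P="\<lambda>U. PP (\<lambda>V. swedge (ev P1) (intprod E4 \<psi>) V + swedge (ev E4) (intprod P1 \<psi>) V) U = 0"])
    apply (simp_all add: PP_def tab sw_ev_pair intprod_single sgn1_def ins_sort r)
    done
  show "PP (\<lambda>V. swedge (ev E4) (intprod P1 \<psi>) V + swedge (ev P1) (intprod E4 \<psi>) V) U = 0"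
    using 1 PP_comm by metis
qed

lemma R1_E4_P2:
  fixes \<psi> :: "ix set \<Rightarrow> real"
  assumes L: "L2 \<psi>" and c: "card U = 2"
  shows "PP (\<lambda>V. swedge (ev P2) (intprod E4 \<psi>) V + swedge (ev E4) (intprod P2 \<psi>) V) U = 0"
    "PP (\<lambda>V. swedge (ev E4) (intprod P2 \<psi>) V + swedge (ev P2) (intprod E4 \<psi>) V) U = 0"
proof -
  note r = L2_rel[OF L2_real_rel[OF L]]
  show 1: "PP (\<lambda>V. swedge (ev P2) (intprod E4 \<psi>) V + swedge (ev E4) (intprod P2 \<psi>) V) U = 0"
    using c
    apply (rule pairs_cases[where P="\<lambda>U. PP (\<lambda>V. swedge (ev P2) (intprod E4 \<psi>) V + swedge (ev E4) (intprod P2 \<psi>) V) U = 0"])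
    apply (simp_all add: PP_def tab sw_ev_pair intprod_single sgn1_def ins_sort r)
    done
  show "PP (\<lambda>V. swedge (ev E4) (intprod P2 \<psi>) V + swedge (ev P2) (intprod E4 \<psi>) V) U = 0"
    using 1 PP_comm by metis
qed

lemma R1_E4_P3:
  fixes \<psi> :: "ix set \<Rightarrow> real"
  assumes L: "L2 \<psi>" and c: "card U = 2"
  shows "PP (\<lambda>V. swedge (ev P3) (intprod E4 \<psi>) V + swedge (ev E4) (intprod P3 \<psi>) V) U = 0"
    "PP (\<lambda>V. swedge (ev E4) (intprod P3 \<psi>) V + swedge (ev P3) (intprod E4 \<psi>) V) U = 0"
proof -
  note r = L2_rel[OF L2_real_rel[OF L]]
  show 1: "PP (\<lambda>V. swedge (ev P3) (intprod E4 \<psi>) V + swedge (ev E4) (intprod P3 \<psi>) V) U = 0"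
    using c
    apply (rule pairs_cases[where P="\<lambda>U. PP (\<lambda>V. swedge (ev P3) (intprod E4 \<psi>) V + swedge (ev E4) (intprod P3 \<psi>) V) U = 0"])
    apply (simp_all add: PP_def tab sw_ev_pair intprod_single sgn1_def ins_sort r)
    done
  show "PP (\<lambda>V. swedge (ev E4) (intprod P3 \<psi>) V + swedge (ev P3) (intprod E4 \<psi>) V) U = 0"
    using 1 PP_comm by metis
qed

lemma R1_E4_P4:
  fixes \<psi> :: "ix set \<Rightarrow> real"
  assumes L: "L2 \<psi>" and c: "card U = 2"
  shows "PP (\<lambda>V. swedge (ev P4) (intprod E4 \<psi>) V + swedge (ev E4) (intprod P4 \<psi>) V) U = 0"
    "PP (\<lambda>V. swedge (ev E4) (intprod P4 \<psi>) V + swedge (ev P4) (intprod E4 \<psi>) V) U = 0"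
proof -
  note r = L2_rel[OF L2_real_rel[OF L]]
  show 1: "PP (\<lambda>V. swedge (ev P4) (intprod E4 \<psi>) V + swedge (ev E4) (intprod P4 \<psi>) V) U = 0"
    using c
    apply (rule pairs_cases[where P="\<lambda>U. PP (\<lambda>V. swedge (ev P4) (intprod E4 \<psi>) V + swedge (ev E4) (intprod P4 \<psi>) V) U = 0"])
    apply (simp_all add: PP_def tab sw_ev_pair intprod_single sgn1_def ins_sort r)
    done
  show "PP (\<lambda>V. swedge (ev E4) (intprod P4 \<psi>) V + swedge (ev P4) (intprod E4 \<psi>) V) U = 0"
    using 1 PP_comm by metis
qed

lemma R1_P1_P1:
  fixes \<psi> :: "ix set \<Rightarrow> real"
  assumes L: "L2 \<psi>" and c: "card U = 2"
  shows "PP (\<lambda>V. swedge (ev P1) (intprod P1 \<psi>) V + swedge (ev P1) (intprod P1 \<psi>) V) U = \<psi> U / 2"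
    "PP (\<lambda>V. swedge (ev P1) (intprod P1 \<psi>) V + swedge (ev P1) (intprod P1 \<psi>) V) U = \<psi> U / 2"
proof -
  note r = L2_rel[OF L2_real_rel[OF L]]
  show 1: "PP (\<lambda>V. swedge (ev P1) (intprod P1 \<psi>) V + swedge (ev P1) (intprod P1 \<psi>) V) U = \<psi> U / 2"
    using c
    apply (rule pairs_cases[where P="\<lambda>U. PP (\<lambda>V. swedge (ev P1) (intprod P1 \<psi>) V + swedge (ev P1) (intprod P1 \<psi>) V) U = \<psi> U / 2"])
    apply (simp_all add: PP_def tab sw_ev_pair intprod_single sgn1_def ins_sort r)
    done
  show "PP (\<lambda>V. swedge (ev P1) (intprod P1 \<psi>) V + swedge (ev P1) (intprod P1 \<psi>) V) U = \<psi> U / 2"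
    using 1 PP_comm by metis
qed

lemma R1_P1_P2:
  fixes \<psi> :: "ix set \<Rightarrow> real"
  assumes L: "L2 \<psi>" and c: "card U = 2"
  shows "PP (\<lambda>V. swedge (ev P2) (intprod P1 \<psi>) V + swedge (ev P1) (intprod P2 \<psi>) V) U = 0"
    "PP (\<lambda>V. swedge (ev P1) (intprod P2 \<psi>) V + swedge (ev P2) (intprod P1 \<psi>) V) U = 0"
proof -
  note r = L2_rel[OF L2_real_rel[OF L]]
  show 1: "PP (\<lambda>V. swedge (ev P2) (intprod P1 \<psi>) V + swedge (ev P1) (intprod P2 \<psi>) V) U = 0"
    using c
    apply (rule pairs_cases[where P="\<lambda>U. PP (\<lambda>V. swedge (ev P2) (intprod P1 \<psi>) V + swedge (ev P1) (intprod P2 \<psi>) V) U = 0"])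
    apply (simp_all add: PP_def tab sw_ev_pair intprod_single sgn1_def ins_sort r)
    done
  show "PP (\<lambda>V. swedge (ev P1) (intprod P2 \<psi>) V + swedge (ev P2) (intprod P1 \<psi>) V) U = 0"
    using 1 PP_comm by metis
qed

lemma R1_P1_P3:
  fixes \<psi> :: "ix set \<Rightarrow> real"
  assumes L: "L2 \<psi>" and c: "card U = 2"
  shows "PP (\<lambda>V. swedge (ev P3) (intprod P1 \<psi>) V + swedge (ev P1) (intprod P3 \<psi>) V) U = 0"
    "PP (\<lambda>V. swedge (ev P1) (intprod P3 \<psi>) V + swedge (ev P3) (intprod P1 \<psi>) V) U = 0"
proof -
  note r = L2_rel[OF L2_real_rel[OF L]]
  show 1: "PP (\<lambda>V. swedge (ev P3) (intprod P1 \<psi>) V + swedge (ev P1) (intprod P3 \<psi>) V) U = 0"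
    using c
    apply (rule pairs_cases[where P="\<lambda>U. PP (\<lambda>V. swedge (ev P3) (intprod P1 \<psi>) V + swedge (ev P1) (intprod P3 \<psi>) V) U = 0"])
    apply (simp_all add: PP_def tab sw_ev_pair intprod_single sgn1_def ins_sort r)
    done
  show "PP (\<lambda>V. swedge (ev P1) (intprod P3 \<psi>) V + swedge (ev P3) (intprod P1 \<psi>) V) U = 0"
    using 1 PP_comm by metis
qed

lemma R1_P1_P4:
  fixes \<psi> :: "ix set \<Rightarrow> real"
  assumes L: "L2 \<psi>" and c: "card U = 2"
  shows "PP (\<lambda>V. swedge (ev P4) (intprod P1 \<psi>) V + swedge (ev P1) (intprod P4 \<psi>) V) U = 0"
    "PP (\<lambda>V. swedge (ev P1) (intprod P4 \<psi>) V + swedge (ev P4) (intprod P1 \<psi>) V) U = 0"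
proof -
  note r = L2_rel[OF L2_real_rel[OF L]]
  show 1: "PP (\<lambda>V. swedge (ev P4) (intprod P1 \<psi>) V + swedge (ev P1) (intprod P4 \<psi>) V) U = 0"
    using c
    apply (rule pairs_cases[where P="\<lambda>U. PP (\<lambda>V. swedge (ev P4) (intprod P1 \<psi>) V + swedge (ev P1) (intprod P4 \<psi>) V) U = 0"])
    apply (simp_all add: PP_def tab sw_ev_pair intprod_single sgn1_def ins_sort r)
    done
  show "PP (\<lambda>V. swedge (ev P1) (intprod P4 \<psi>) V + swedge (ev P4) (intprod P1 \<psi>) V) U = 0"
    using 1 PP_comm by metis
qed

lemma R1_P2_P2:
  fixes \<psi> :: "ix set \<Rightarrow> real"
  assumes L: "L2 \<psi>" and c: "card U = 2"
  shows "PP (\<lambda>V. swedge (ev P2) (intprod P2 \<psi>) V + swedge (ev P2) (intprod P2 \<psi>) V) U = \<psi> U / 2"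
    "PP (\<lambda>V. swedge (ev P2) (intprod P2 \<psi>) V + swedge (ev P2) (intprod P2 \<psi>) V) U = \<psi> U / 2"
proof -
  note r = L2_rel[OF L2_real_rel[OF L]]
  show 1: "PP (\<lambda>V. swedge (ev P2) (intprod P2 \<psi>) V + swedge (ev P2) (intprod P2 \<psi>) V) U = \<psi> U / 2"
    using c
    apply (rule pairs_cases[where P="\<lambda>U. PP (\<lambda>V. swedge (ev P2) (intprod P2 \<psi>) V + swedge (ev P2) (intprod P2 \<psi>) V) U = \<psi> U / 2"])
    apply (simp_all add: PP_def tab sw_ev_pair intprod_single sgn1_def ins_sort r)
    done
  show "PP (\<lambda>V. swedge (ev P2) (intprod P2 \<psi>) V + swedge (ev P2) (intprod P2 \<psi>) V) U = \<psi> U / 2"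
    using 1 PP_comm by metis
qed

lemma R1_P2_P3:
  fixes \<psi> :: "ix set \<Rightarrow> real"
  assumes L: "L2 \<psi>" and c: "card U = 2"
  shows "PP (\<lambda>V. swedge (ev P3) (intprod P2 \<psi>) V + swedge (ev P2) (intprod P3 \<psi>) V) U = 0"
    "PP (\<lambda>V. swedge (ev P2) (intprod P3 \<psi>) V + swedge (ev P3) (intprod P2 \<psi>) V) U = 0"
proof -
  note r = L2_rel[OF L2_real_rel[OF L]]
  show 1: "PP (\<lambda>V. swedge (ev P3) (intprod P2 \<psi>) V + swedge (ev P2) (intprod P3 \<psi>) V) U = 0"
    using c
    apply (rule pairs_cases[where P="\<lambda>U. PP (\<lambda>V. swedge (ev P3) (intprod P2 \<psi>) V + swedge (ev P2) (intprod P3 \<psi>) V) U = 0"])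
    apply (simp_all add: PP_def tab sw_ev_pair intprod_single sgn1_def ins_sort r)
    done
  show "PP (\<lambda>V. swedge (ev P2) (intprod P3 \<psi>) V + swedge (ev P3) (intprod P2 \<psi>) V) U = 0"
    using 1 PP_comm by metis
qed

lemma R1_P2_P4:
  fixes \<psi> :: "ix set \<Rightarrow> real"
  assumes L: "L2 \<psi>" and c: "card U = 2"
  shows "PP (\<lambda>V. swedge (ev P4) (intprod P2 \<psi>) V + swedge (ev P2) (intprod P4 \<psi>) V) U = 0"
    "PP (\<lambda>V. swedge (ev P2) (intprod P4 \<psi>) V + swedge (ev P4) (intprod P2 \<psi>) V) U = 0"
proof -
  note r = L2_rel[OF L2_real_rel[OF L]]
  show 1: "PP (\<lambda>V. swedge (ev P4) (intprod P2 \<psi>) V + swedge (ev P2) (intprod P4 \<psi>) V) U = 0"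
    using c
    apply (rule pairs_cases[where P="\<lambda>U. PP (\<lambda>V. swedge (ev P4) (intprod P2 \<psi>) V + swedge (ev P2) (intprod P4 \<psi>) V) U = 0"])
    apply (simp_all add: PP_def tab sw_ev_pair intprod_single sgn1_def ins_sort r)
    done
  show "PP (\<lambda>V. swedge (ev P2) (intprod P4 \<psi>) V + swedge (ev P4) (intprod P2 \<psi>) V) U = 0"
    using 1 PP_comm by metis
qed

lemma R1_P3_P3:
  fixes \<psi> :: "ix set \<Rightarrow> real"
  assumes L: "L2 \<psi>" and c: "card U = 2"
  shows "PP (\<lambda>V. swedge (ev P3) (intprod P3 \<psi>) V + swedge (ev P3) (intprod P3 \<psi>) V) U = \<psi> U / 2"
    "PP (\<lambda>V. swedge (ev P3) (intprod P3 \<psi>) V + swedge (ev P3) (intprod P3 \<psi>) V) U = \<psi> U / 2"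
proof -
  note r = L2_rel[OF L2_real_rel[OF L]]
  show 1: "PP (\<lambda>V. swedge (ev P3) (intprod P3 \<psi>) V + swedge (ev P3) (intprod P3 \<psi>) V) U = \<psi> U / 2"
    using c
    apply (rule pairs_cases[where P="\<lambda>U. PP (\<lambda>V. swedge (ev P3) (intprod P3 \<psi>) V + swedge (ev P3) (intprod P3 \<psi>) V) U = \<psi> U / 2"])
    apply (simp_all add: PP_def tab sw_ev_pair intprod_single sgn1_def ins_sort r)
    done
  show "PP (\<lambda>V. swedge (ev P3) (intprod P3 \<psi>) V + swedge (ev P3) (intprod P3 \<psi>) V) U = \<psi> U / 2"
    using 1 PP_comm by metis
qed

lemma R1_P3_P4:
  fixes \<psi> :: "ix set \<Rightarrow> real"
  assumes L: "L2 \<psi>" and c: "card U = 2"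
  shows "PP (\<lambda>V. swedge (ev P4) (intprod P3 \<psi>) V + swedge (ev P3) (intprod P4 \<psi>) V) U = 0"
    "PP (\<lambda>V. swedge (ev P3) (intprod P4 \<psi>) V + swedge (ev P4) (intprod P3 \<psi>) V) U = 0"
proof -
  note r = L2_rel[OF L2_real_rel[OF L]]
  show 1: "PP (\<lambda>V. swedge (ev P4) (intprod P3 \<psi>) V + swedge (ev P3) (intprod P4 \<psi>) V) U = 0"
    using c
    apply (rule pairs_cases[where P="\<lambda>U. PP (\<lambda>V. swedge (ev P4) (intprod P3 \<psi>) V + swedge (ev P3) (intprod P4 \<psi>) V) U = 0"])
    apply (simp_all add: PP_def tab sw_ev_pair intprod_single sgn1_def ins_sort r)
    done
  show "PP (\<lambda>V. swedge (ev P3) (intprod P4 \<psi>) V + swedge (ev P4) (intprod P3 \<psi>) V) U = 0"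
    using 1 PP_comm by metis
qed

lemma R1_P4_P4:
  fixes \<psi> :: "ix set \<Rightarrow> real"
  assumes L: "L2 \<psi>" and c: "card U = 2"
  shows "PP (\<lambda>V. swedge (ev P4) (intprod P4 \<psi>) V + swedge (ev P4) (intprod P4 \<psi>) V) U = \<psi> U / 2"
    "PP (\<lambda>V. swedge (ev P4) (intprod P4 \<psi>) V + swedge (ev P4) (intprod P4 \<psi>) V) U = \<psi> U / 2"
proof -
  note r = L2_rel[OF L2_real_rel[OF L]]
  show 1: "PP (\<lambda>V. swedge (ev P4) (intprod P4 \<psi>) V + swedge (ev P4) (intprod P4 \<psi>) V) U = \<psi> U / 2"
    using c
    apply (rule pairs_cases[where P="\<lambda>U. PP (\<lambda>V. swedge (ev P4) (intprod P4 \<psi>) V + swedge (ev P4) (intprod P4 \<psi>) V) U = \<psi> U / 2"])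
    apply (simp_all add: PP_def tab sw_ev_pair intprod_single sgn1_def ins_sort r)
    done
  show "PP (\<lambda>V. swedge (ev P4) (intprod P4 \<psi>) V + swedge (ev P4) (intprod P4 \<psi>) V) U = \<psi> U / 2"
    using 1 PP_comm by metis
qed

lemma R2_Yi:
  fixes \<psi> :: "ix set \<Rightarrow> real"
  assumes L: "L2 \<psi>" and c: "card U = 2"
  shows "PP (Yi \<psi>) U = Yi \<psi> U"
proof -
  note r = L2_rel[OF L2_real_rel[OF L]]
  show ?thesis
    using c
    apply (rule pairs_cases[where P="\<lambda>U. PP _ U = _ U"])
    apply (simp_all add: PP_def tab sw_ev_pair intprod_single sgn1_def ins_sort r Yi_def sw_def)
    done
qed

lemma R2_Yj:
  fixes \<psi> :: "ix set \<Rightarrow> real"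
  assumes L: "L2 \<psi>" and c: "card U = 2"
  shows "PP (Yj \<psi>) U = Yj \<psi> U"
proof -
  note r = L2_rel[OF L2_real_rel[OF L]]
  show ?thesis
    using c
    apply (rule pairs_cases[where P="\<lambda>U. PP _ U = _ U"])
    apply (simp_all add: PP_def tab sw_ev_pair intprod_single sgn1_def ins_sort r Yj_def sw_def)
    done
qed

lemma R2_Yk:
  fixes \<psi> :: "ix set \<Rightarrow> real"
  assumes L: "L2 \<psi>" and c: "card U = 2"
  shows "PP (Yk \<psi>) U = Yk \<psi> U"
proof -
  note r = L2_rel[OF L2_real_rel[OF L]]
  show ?thesis
    using c
    apply (rule pairs_cases[where P="\<lambda>U. PP _ U = _ U"])
    apply (simp_all add: PP_def tab sw_ev_pair intprod_single sgn1_def ins_sort r Yk_def sw_def)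
    done
qed

lemmas R1_all = R1_E1_E1 R1_E1_E2 R1_E1_E3 R1_E1_E4 R1_E1_P1 R1_E1_P2 R1_E1_P3 R1_E1_P4 R1_E2_E2 R1_E2_E3 R1_E2_E4 R1_E2_P1 R1_E2_P2 R1_E2_P3 R1_E2_P4 R1_E3_E3 R1_E3_E4 R1_E3_P1 R1_E3_P2 R1_E3_P3 R1_E3_P4 R1_E4_E4 R1_E4_P1 R1_E4_P2 R1_E4_P3 R1_E4_P4 R1_P1_P1 R1_P1_P2 R1_P1_P3 R1_P1_P4 R1_P2_P2 R1_P2_P3 R1_P2_P4 R1_P3_P3 R1_P3_P4 R1_P4_P4


lemma card_UNIV_ix: "card (UNIV :: ix set) = 8"
  by (simp add: UNIV_ix)

lemma two_form_sw: "is_two_form f \<Longrightarrow> is_two_form (sw k l f)"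
  unfolding is_two_form_def sw_def
proof (intro allI impI)
  fix V :: "ix set"
  assume f: "\<forall>U. card U \<noteq> 2 \<longrightarrow> f U = 0" and c: "card V \<noteq> 2"
  show "swedge (ev k) (intprod l f) V = 0"
  proof (cases "k \<in> V \<and> l \<notin> V - {k}")
    case True
    then have "card (insert l (V - {k})) = card V"
      by (simp add: card_Diff_singleton) (metis One_nat_def Suc_pred card_gt_0_iff empty_iff finite)
    then show ?thesis using True f c by (simp add: swedge_ev intprod_def)
  next
    case False
    then show ?thesis by (auto simp add: swedge_ev intprod_def)
  qed
qed

lemma swK_zero:
  assumes f: "is_two_form f" and K: "card K = 4" and U: "card U \<noteq> 2"
  shows "swK K f (UNIV - U) = 0"
proof (cases "K \<subseteq> UNIV - U")
  case True
  have "card (UNIV - U - K) = card (UNIV - U) - card K" using True by (simp add: card_Diff_subset)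
  also have "card (UNIV - U) = 8 - card U" by (simp add: card_Diff_subset card_UNIV_ix)
  moreover have "card U \<le> 8" using card_mono[of UNIV U] card_UNIV_ix by simp
  ultimately have "card (UNIV - U - K) \<noteq> 2" using K U by linarith
  then show ?thesis using f True by (simp add: swK_def is_two_form_def)
next
  case False
  then show ?thesis by (simp add: swK_def)
qed

lemma star_Om_zero:
  assumes f: "is_two_form f" and U: "card U \<noteq> 2"
  shows "star (swedge Omega f) U = 0"
  unfolding star_def swedge_Omega
  by (simp add: swK_zero[OF f _ U])

lemma PP_zero: "is_two_form f \<Longrightarrow> card U \<noteq> 2 \<Longrightarrow> PP f U = 0"
  unfolding PP_def by (simp add: star_Om_zero is_two_form_def)

lemma two_form_add: "is_two_form f \<Longrightarrow> is_two_form g \<Longrightarrow> is_two_form (\<lambda>V. f V + g V)"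
  by (simp add: is_two_form_def)
lemma two_form_diff: "is_two_form f \<Longrightarrow> is_two_form g \<Longrightarrow> is_two_form (\<lambda>V. f V - g V)"
  by (simp add: is_two_form_def)

lemma R1_real:
  fixes \<psi> :: "ix set \<Rightarrow> real"
  assumes L: "L2 \<psi>"
  shows "PP (\<lambda>V. sw b a \<psi> V + sw a b \<psi> V) U = (if a = b then \<psi> U / 2 else 0)"
proof (cases "card U = 2")
  case True
  show ?thesis unfolding sw_def
    by (cases a; cases b; (simp only: R1_all[OF L True]); simp)
next
  case False
  have t: "is_two_form \<psi>" using L by (simp add: L2_def)
  then have "is_two_form (\<lambda>V. sw b a \<psi> V + sw a b \<psi> V)"
    by (intro two_form_add two_form_sw[unfolded is_two_form_def, folded is_two_form_def])
  then show ?thesis using False t by (simp add: PP_zero is_two_form_def)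
qed


lemma bl_entry: "bounded_linear (\<lambda>x::gmat. x $ i $ j)"
  by (rule bounded_linear_compose[OF bounded_linear_vec_nth bounded_linear_vec_nth])

lemma sw_lin: "bounded_linear h \<Longrightarrow> h (sw k l \<psi> V) = sw k l (\<lambda>S. h (\<psi> S)) V"
  unfolding sw_def by (simp add: swedge_lin intprod_lin)

lemma L2_lin:
  assumes h: "bounded_linear h" and L: "L2 \<psi>"
  shows "L2 (\<lambda>S. h (\<psi> S))"
proof -
  have "h (3 *\<^sub>R \<psi> U - star (swedge Omega \<psi>) U) = 3 *\<^sub>R h (\<psi> U) - star (swedge Omega (\<lambda>S. h (\<psi> S))) U" for U
    using h by (simp add: bounded_linear.linear linear_diff linear_cmul star_lin swedge_lin)
  then show ?thesis using L h unfolding L2_def is_two_form_def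
    by (simp add: bounded_linear.linear linear_0)
qed

lemma R2_real:
  fixes \<psi> :: "ix set \<Rightarrow> real"
  assumes L: "L2 \<psi>"
  shows "PP (Yi \<psi>) U = Yi \<psi> U" "PP (Yj \<psi>) U = Yj \<psi> U" "PP (Yk \<psi>) U = Yk \<psi> U"
proof -
  have t: "is_two_form \<psi>" using L by (simp add: L2_def)
  have tw: "is_two_form (sw k l \<psi>)" for k l using two_form_sw[OF t] .
  have ty: "is_two_form (Yi \<psi>)" "is_two_form (Yj \<psi>)" "is_two_form (Yk \<psi>)"
    using tw unfolding Yi_def Yj_def Yk_def is_two_form_def by simp_all
  show "PP (Yi \<psi>) U = Yi \<psi> U"
    by (cases "card U = 2") (simp_all add: R2_Yi[OF L] PP_zero ty, use ty in \<open>simp add: is_two_form_def\<close>)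
  show "PP (Yj \<psi>) U = Yj \<psi> U"
    by (cases "card U = 2") (simp_all add: R2_Yj[OF L] PP_zero ty, use ty in \<open>simp add: is_two_form_def\<close>)
  show "PP (Yk \<psi>) U = Yk \<psi> U"
    by (cases "card U = 2") (simp_all add: R2_Yk[OF L] PP_zero ty, use ty in \<open>simp add: is_two_form_def\<close>)
qed

lemma entry_eqI: "(\<And>i j. (x::gmat) $ i $ j = y $ i $ j) \<Longrightarrow> x = y"
  by (simp add: vec_eq_iff)

lemma G1:
  fixes \<psi> :: "ix set \<Rightarrow> gmat"
  assumes L: "L2 \<psi>"
  shows "PP (\<lambda>V. sw b a \<psi> V + sw a b \<psi> V) U = (if a = b then (1/2) *\<^sub>R \<psi> U else 0)"
proof (rule entry_eqI)
  fix i j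
  have "(PP (\<lambda>V. sw b a \<psi> V + sw a b \<psi> V) U) $ i $ j
     = PP (\<lambda>V. sw b a (\<lambda>S. \<psi> S $ i $ j) V + sw a b (\<lambda>S. \<psi> S $ i $ j) V) U"
    by (simp add: PP_lin[OF bl_entry] sw_lin[OF bl_entry])
  also have "\<dots> = (if a = b then \<psi> U $ i $ j / 2 else 0)"
    by (rule R1_real[OF L2_lin[OF bl_entry L]])
  finally show "(PP (\<lambda>V. sw b a \<psi> V + sw a b \<psi> V) U) $ i $ j = (if a = b then (1/2) *\<^sub>R \<psi> U else 0) $ i $ j"
    by simp
qed

lemma Y_lin:
  assumes "bounded_linear h"
  shows "h (Yi \<psi> V) = Yi (\<lambda>S. h (\<psi> S)) V" "h (Yj \<psi> V) = Yj (\<lambda>S. h (\<psi> S)) V"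
    "h (Yk \<psi> V) = Yk (\<lambda>S. h (\<psi> S)) V"
  unfolding Yi_def Yj_def Yk_def
  using assms by (simp_all add: bounded_linear.linear linear_diff linear_add sw_lin)

lemma G2:
  fixes \<psi> :: "ix set \<Rightarrow> gmat"
  assumes L: "L2 \<psi>"
  shows "PP (Yi \<psi>) U = Yi \<psi> U" "PP (Yj \<psi>) U = Yj \<psi> U" "PP (Yk \<psi>) U = Yk \<psi> U"
proof -
  have Lij: "L2 (\<lambda>S. \<psi> S $ i $ j)" for i j by (rule L2_lin[OF bl_entry L])
  show "PP (Yi \<psi>) U = Yi \<psi> U"
    by (rule entry_eqI) (simp add: PP_lin[OF bl_entry] Y_lin[OF bl_entry] R2_real[OF Lij])
  show "PP (Yj \<psi>) U = Yj \<psi> U"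
    by (rule entry_eqI) (simp add: PP_lin[OF bl_entry] Y_lin[OF bl_entry] R2_real[OF Lij])
  show "PP (Yk \<psi>) U = Yk \<psi> U"
    by (rule entry_eqI) (simp add: PP_lin[OF bl_entry] Y_lin[OF bl_entry] R2_real[OF Lij])
qed


abbreviation fd :: "(pt \<Rightarrow> 'b::real_normed_vector) \<Rightarrow> pt \<Rightarrow> pt \<Rightarrow> 'b" where
  "fd f q v \<equiv> frechet_derivative f (at q) v"

lemma smooth2:
  fixes f :: "pt \<Rightarrow> 'b::real_normed_vector"
  assumes "smooth f"
  shows "(f has_derivative fd f q) (at q)"
    and "((\<lambda>q. fd f q v) has_derivative fd (\<lambda>q. fd f q v) q) (at q)"
    and "continuous_on UNIV (\<lambda>q. fd (\<lambda>q. fd f q v) q w)"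
proof -
  have c: "Ck (Suc (Suc 0)) f" using assms unfolding smooth_def by blast
  then show "(f has_derivative fd f q) (at q)"
    by (simp add: differentiable_on_def frechet_derivative_works[symmetric])
  show "((\<lambda>q. fd f q v) has_derivative fd (\<lambda>q. fd f q v) q) (at q)"
    using c by (simp add: differentiable_on_def frechet_derivative_works[symmetric])
  show "continuous_on UNIV (\<lambda>q. fd (\<lambda>q. fd f q v) q w)"
    using c by simp
qed

lemma schwarz_mat:
  fixes f :: "pt \<Rightarrow> gmat"
  assumes "smooth f"
  shows "fd (\<lambda>q. fd f q va) p vb = fd (\<lambda>q. fd f q vb) p va"
proof (rule entry_eqI)
  fix i j
  note bl = bl_entry[of i j]
  show "fd (\<lambda>q. fd f q va) p vb $ i $ j = fd (\<lambda>q. fd f q vb) p va $ i $ j"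
  proof (rule schwarz[where u="\<lambda>q. f q $ i $ j" and Du="\<lambda>q v. fd f q v $ i $ j"])
    show "((\<lambda>q. f q $ i $ j) has_derivative (\<lambda>v. fd f q v $ i $ j)) (at q)" for q
      by (rule bounded_linear.has_derivative[OF bl smooth2(1)[OF assms]])
    show "((\<lambda>q. fd f q va $ i $ j) has_derivative (\<lambda>w. fd (\<lambda>q. fd f q va) q w $ i $ j)) (at q)" for q
      by (rule bounded_linear.has_derivative[OF bl smooth2(2)[OF assms]])
    show "((\<lambda>q. fd f q vb $ i $ j) has_derivative (\<lambda>w. fd (\<lambda>q. fd f q vb) q w $ i $ j)) (at q)" for q
      by (rule bounded_linear.has_derivative[OF bl smooth2(2)[OF assms]])
    show "continuous_on UNIV (\<lambda>q. fd (\<lambda>q. fd f q va) q vb $ i $ j)"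
      by (rule bounded_linear.continuous_on[OF bl smooth2(3)[OF assms]])
    show "continuous_on UNIV (\<lambda>q. fd (\<lambda>q. fd f q vb) q va $ i $ j)"
      by (rule bounded_linear.continuous_on[OF bl smooth2(3)[OF assms]])
  qed
qed

definition Mc :: "pt \<Rightarrow> ix \<Rightarrow> gmat" where
  "Mc v a = (case a of
        P1 \<Rightarrow> (- v$P2) *\<^sub>R gi + (- v$P3) *\<^sub>R gj + (- v$P4) *\<^sub>R gk
      | P2 \<Rightarrow> (v$P1) *\<^sub>R gi + (- v$P4) *\<^sub>R gj + (v$P3) *\<^sub>R gk
      | P3 \<Rightarrow> (v$P4) *\<^sub>R gi + (v$P1) *\<^sub>R gj + (- v$P2) *\<^sub>R gk
      | P4 \<Rightarrow> (- v$P3) *\<^sub>R gi + (v$P2) *\<^sub>R gj + (v$P1) *\<^sub>R gk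
      | _ \<Rightarrow> 0)"

lemma Bc_Mc: "Bc \<epsilon> q a = (1 / (\<epsilon>^2 + ysq q)) *\<^sub>R Mc q a"
  unfolding Bc_def Mc_def ..

lemma hd_nth: "((\<lambda>q::pt. q $ i) has_derivative (\<lambda>v. v $ i)) (at q)"
  by (rule bounded_linear.has_derivative[OF bounded_linear_vec_nth has_derivative_ident])

lemma hd_Mc: "((\<lambda>q. Mc q a) has_derivative (\<lambda>v. Mc v a)) (at q)"
  unfolding Mc_def
  by (cases a) (auto intro!: derivative_eq_intros hd_nth)

lemma ysq_pos: "\<epsilon> > 0 \<Longrightarrow> \<epsilon>^2 + ysq q > 0"
  unfolding ysq_def by (simp add: add_pos_nonneg)

definition yv :: "pt \<Rightarrow> pt \<Rightarrow> real" where
  "yv q v = q$P1 * v$P1 + q$P2 * v$P2 + q$P3 * v$P3 + q$P4 * v$P4"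

lemma hd_ysq: "(ysq has_derivative (\<lambda>v. 2 * yv q v)) (at q)"
  unfolding ysq_def yv_def
  by (auto intro!: derivative_eq_intros hd_nth simp: power2_eq_square algebra_simps)

lemma hd_Bc:
  assumes e: "\<epsilon> > 0"
  shows "((\<lambda>q. Bc \<epsilon> q a) has_derivative
     (\<lambda>v. (1 / (\<epsilon>^2 + ysq q)) *\<^sub>R Mc v a - (2 * yv q v / (\<epsilon>^2 + ysq q)^2) *\<^sub>R Mc q a)) (at q)"
proof -
  have n: "\<epsilon>^2 + ysq q \<noteq> 0" using ysq_pos[OF e, of q] by linarith
  have "((\<lambda>q. 1 / (\<epsilon>^2 + ysq q)) has_derivative (\<lambda>v. - (2 * yv q v / (\<epsilon>^2 + ysq q)^2))) (at q)"
    using n by (auto intro!: derivative_eq_intros hd_ysq simp: power2_eq_square field_simps)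
  from has_derivative_scaleR[OF this hd_Mc[of a q]] show ?thesis
    unfolding Bc_Mc by (simp add: algebra_simps)
qed


lemma hd_swedge:
  assumes "\<And>S. ((\<lambda>q. \<omega> q S) has_derivative \<omega>' S) (at p)"
  shows "((\<lambda>q. swedge \<alpha> (\<omega> q) U) has_derivative (\<lambda>v. swedge \<alpha> (\<lambda>S. \<omega>' S v) U)) (at p)"
  unfolding swedge_def wedge_with_def
  by (intro has_derivative_sum has_derivative_scaleR_right assms)

lemma hd_star:
  assumes "((\<lambda>q. \<omega> q (UNIV - U)) has_derivative \<omega>') (at p)"
  shows "((\<lambda>q. star (\<omega> q) U) has_derivative (\<lambda>v. sgn (UNIV - U) U *\<^sub>R \<omega>' v)) (at p)"
  unfolding star_def
  by (intro has_derivative_scaleR_right assms)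

lemma hd_starsw:
  assumes "\<And>S. ((\<lambda>q. \<omega> q S) has_derivative \<omega>' S) (at p)"
  shows "((\<lambda>q. star (swedge \<alpha> (\<omega> q)) U) has_derivative (\<lambda>v. star (swedge \<alpha> (\<lambda>S. \<omega>' S v)) U)) (at p)"
  using hd_star[OF hd_swedge[OF assms]] unfolding star_def .

lemma hd_intprod:
  assumes "\<And>S. ((\<lambda>q. \<omega> q S) has_derivative \<omega>' S) (at p)"
  shows "((\<lambda>q. intprod a (\<omega> q) T) has_derivative (\<lambda>v. intprod a (\<lambda>S. \<omega>' S v) T)) (at p)"
  unfolding intprod_def
  by (cases "a \<in> T") (simp_all add: has_derivative_scaleR_right assms)

lemma L2_deriv:
  fixes \<omega> :: "pt \<Rightarrow> ix set \<Rightarrow> 'v::real_normed_vector"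
  assumes L: "\<And>q. L2 (\<omega> q)"
    and d: "\<And>S. ((\<lambda>q. \<omega> q S) has_derivative \<omega>' S) (at p)"
  shows "L2 (\<lambda>S. \<omega>' S v)"
proof -
  have tf: "is_two_form (\<lambda>S. \<omega>' S v)"
    unfolding is_two_form_def
  proof (intro allI impI)
    fix U :: "ix set" assume c: "card U \<noteq> 2"
    have "(\<lambda>q. \<omega> q U) = (\<lambda>q. 0)" using L c by (auto simp: L2_def is_two_form_def)
    then have "((\<lambda>q. \<omega> q U) has_derivative (\<lambda>v. 0)) (at p)" by simp
    with d[of U] have "\<omega>' U = (\<lambda>v. 0)" using has_derivative_unique by blast
    then show "\<omega>' U v = 0" by simp
  qed
  have "3 *\<^sub>R \<omega>' U v - star (swedge Omega (\<lambda>S. \<omega>' S v)) U = 0" for U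
  proof -
    have h1: "((\<lambda>q. 3 *\<^sub>R \<omega> q U - star (swedge Omega (\<omega> q)) U) has_derivative
       (\<lambda>v. 3 *\<^sub>R \<omega>' U v - star (swedge Omega (\<lambda>S. \<omega>' S v)) U)) (at p)"
      by (intro has_derivative_diff has_derivative_scaleR_right d hd_starsw)
    have "(\<lambda>q. 3 *\<^sub>R \<omega> q U - star (swedge Omega (\<omega> q)) U) = (\<lambda>q. 0)"
      using L by (auto simp: L2_def)
    then have h2: "((\<lambda>q. 3 *\<^sub>R \<omega> q U - star (swedge Omega (\<omega> q)) U) has_derivative (\<lambda>v. 0)) (at p)"
      by simp
    from has_derivative_unique[OF h1 h2] show ?thesis by meson
  qed
  then show ?thesis using tf by (simp add: L2_def)
qed

lemma L2_add: "L2 f \<Longrightarrow> L2 g \<Longrightarrow> L2 (\<lambda>S. f S + g S)"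
  unfolding L2_def is_two_form_def
  by (simp add: swedge_add2' star_add scaleR_add_right algebra_simps)

lemma L2_gbr: "L2 f \<Longrightarrow> L2 (\<lambda>S. gbr X (f S))"
  by (rule L2_lin[OF bl_gbr])

lemma sum_ev: "(\<Sum>b\<in>UNIV. swedge (ev b) (g b) U) = (\<Sum>b\<in>U. sgn {b} (U - {b}) *\<^sub>R g b (U - {b}))"
  by (simp add: swedge_ev sum.If_cases)

lemma wedge_Bform:
  "wedge_with gbr (Bform \<epsilon> p) w U = (\<Sum>b\<in>U. sgn {b} (U - {b}) *\<^sub>R gbr (Bc \<epsilon> p b) (w (U - {b})))"
proof -
  have "wedge_with gbr (Bform \<epsilon> p) w U
     = (\<Sum>S\<in>Pow U. if \<exists>a. S = {a} then sgn S (U - S) *\<^sub>R gbr (Bc \<epsilon> p (the_elem S)) (w (U - S)) else 0)"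
    unfolding wedge_with_def Bform_def by (intro sum.cong) (auto simp: gbr_zero1)
  also have "\<dots> = (\<Sum>S\<in>(\<lambda>b. {b}) ` U. sgn S (U - S) *\<^sub>R gbr (Bc \<epsilon> p (the_elem S)) (w (U - S)))"
    by (rule sum.mono_neutral_cong_right) auto
  also have "\<dots> = (\<Sum>b\<in>U. sgn {b} (U - {b}) *\<^sub>R gbr (Bc \<epsilon> p b) (w (U - {b})))"
    by (subst sum.reindex) (auto simp: inj_on_def)
  finally show ?thesis .
qed

lemma DB_expand: "DB \<epsilon> \<omega> p U = (\<Sum>b\<in>UNIV. swedge (ev b) (cov b \<epsilon> \<omega> p) U)"
  unfolding DB_def dform_def wedge_Bform sum_ev cov_def
  by (simp add: sum.distrib scaleR_add_right)


lemma pd_eta: "pd b \<omega> p = (\<lambda>S. frechet_derivative (\<lambda>q. \<omega> q S) (at p) (axis b 1))"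
  by (simp add: pd_def fun_eq_iff)

lemma rank_inj: "rank a = rank b \<Longrightarrow> a = b"
  by (cases a; cases b; simp)

lemma sgn1_cases: "a \<noteq> b \<Longrightarrow> (sgn1 a b = 1 \<and> sgn1 b a = -1) \<or> (sgn1 a b = -1 \<and> sgn1 b a = 1)"
  unfolding sgn1_def using rank_inj by (metis less_asym linorder_neqE_nat)

definition dBv :: "real \<Rightarrow> pt \<Rightarrow> ix \<Rightarrow> pt \<Rightarrow> gmat" where
  "dBv \<epsilon> q a v = (1 / (\<epsilon>^2 + ysq q)) *\<^sub>R Mc v a - (2 * yv q v / (\<epsilon>^2 + ysq q)^2) *\<^sub>R Mc q a"

context
  fixes \<epsilon> :: real and \<phi> :: gform
  assumes e: "\<epsilon> > 0" and sm: "smooth_form \<phi>" and L: "\<forall>x. in_Lambda2plus (\<phi> x)"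
begin


lemma smS: "smooth (\<lambda>q. \<phi> q S)"
  using sm by (simp add: smooth_form_def)

lemma hphi: "((\<lambda>q. \<phi> q S) has_derivative fd (\<lambda>q. \<phi> q S) q) (at q)"
  by (rule smooth2(1)[OF smS])

lemma hpd: "((\<lambda>q. pd a \<phi> q S) has_derivative fd (\<lambda>q. pd a \<phi> q S) q) (at q)"
  unfolding pd_def by (rule smooth2(2)[OF smS])

lemma hBc: "((\<lambda>q. Bc \<epsilon> q a) has_derivative dBv \<epsilon> q a) (at q)"
  using hd_Bc[OF e] unfolding dBv_def .

lemma hcov: "((\<lambda>q. cov a \<epsilon> \<phi> q S) has_derivative
    (\<lambda>v. fd (\<lambda>q. pd a \<phi> q S) q v + (gbr (Bc \<epsilon> q a) (fd (\<lambda>q. \<phi> q S) q v) + gbr (dBv \<epsilon> q a v) (\<phi> q S)))) (at q)"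
  unfolding cov_def
  by (intro has_derivative_add hpd bounded_bilinear.FDERIV[OF bb_gbr hBc hphi])

lemma pd_cov: "pd b (cov a \<epsilon> \<phi>) p S = pd b (pd a \<phi>) p S + (gbr (Bc \<epsilon> p a) (pd b \<phi> p S) + gbr (dBv \<epsilon> p a (axis b 1)) (\<phi> p S))"
  unfolding pd_def[of b "cov a \<epsilon> \<phi>"] frechet_derivative_at[OF hcov, symmetric]
  by (simp add: pd_def)

lemma pd_Bform: "pd b (Bform \<epsilon>) p {a} = dBv \<epsilon> p a (axis b 1)"
proof -
  have "(\<lambda>q. Bform \<epsilon> q {a}) = (\<lambda>q. Bc \<epsilon> q a)" by (simp add: Bform_def)
  then show ?thesis unfolding pd_def using frechet_derivative_at[OF hBc] by simp
qed

lemma FB_eval: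
  assumes ab: "a \<noteq> b"
  shows "eval2 (FB \<epsilon> p) b a = dBv \<epsilon> p a (axis b 1) - dBv \<epsilon> p b (axis a 1) + gbr (Bc \<epsilon> p b) (Bc \<epsilon> p a)"
proof -
  have Bs: "Bform \<epsilon> p {x} = Bc \<epsilon> p x" for x by (simp add: Bform_def)
  have d: "{b, a} - {b} = {a}" "{b, a} - {a} = {b}" using ab by auto
  have "eval2 (FB \<epsilon> p) b a = sgn1 b a *\<^sub>R (sgn1 b a *\<^sub>R dBv \<epsilon> p a (axis b 1) + sgn1 a b *\<^sub>R dBv \<epsilon> p b (axis a 1)
      + (1/2) *\<^sub>R (sgn1 b a *\<^sub>R gbr (Bc \<epsilon> p b) (Bc \<epsilon> p a) + sgn1 a b *\<^sub>R gbr (Bc \<epsilon> p a) (Bc \<epsilon> p b)))"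
    unfolding eval2_def FB_def dform_def wedge_Bform
    using ab by (simp add: d sgn_single pd_Bform Bs)
  also have "\<dots> = dBv \<epsilon> p a (axis b 1) - dBv \<epsilon> p b (axis a 1) + gbr (Bc \<epsilon> p b) (Bc \<epsilon> p a)"
    using sgn1_cases[OF ab] gbr_anti[of "Bc \<epsilon> p a" "Bc \<epsilon> p b"]
    by (auto simp: algebra_simps)
  finally show ?thesis .
qed

lemma schw: "pd b (pd a \<phi>) p S = pd a (pd b \<phi>) p S"
  unfolding pd_def using schwarz_mat[OF smS] by simp

lemma comm: "cov b \<epsilon> (cov a \<epsilon> \<phi>) p S - cov a \<epsilon> (cov b \<epsilon> \<phi>) p S = gbr (eval2 (FB \<epsilon> p) b a) (\<phi> p S)"
proof (cases "a = b")
  case True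
  then show ?thesis by (simp add: eval2_def gbr_zero1)
next
  case False
  have j: "gbr (gbr X Y) Z = gbr X (gbr Y Z) - gbr Y (gbr X Z)" for X Y Z using gbr_jacobi by simp
  show ?thesis
    unfolding FB_eval[OF False]
    by (simp add: cov_def[of b \<epsilon> "cov a \<epsilon> \<phi>"] cov_def[of a \<epsilon> "cov b \<epsilon> \<phi>"] pd_cov schw[of a b]
        cov_def[of a \<epsilon> \<phi>] cov_def[of b \<epsilon> \<phi>] gbr_add1 gbr_add2 gbr_diff1 j algebra_simps)
qed


lemma L2phi: "L2 (\<phi> q)"
  using L by (simp add: in_L2)

lemma L2_pdphi: "L2 (pd a \<phi> q)"
proof -
  have "pd a \<phi> q = (\<lambda>S. fd (\<lambda>q. \<phi> q S) q (axis a 1))" by (simp add: pd_def fun_eq_iff)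
  then show ?thesis using L2_deriv[OF L2phi hphi] by simp
qed

lemma L2_cov: "L2 (cov a \<epsilon> \<phi> q)"
proof -
  have "cov a \<epsilon> \<phi> q = (\<lambda>S. pd a \<phi> q S + gbr (Bc \<epsilon> q a) (\<phi> q S))" by (simp add: cov_def fun_eq_iff)
  then show ?thesis using L2_add[OF L2_pdphi L2_gbr[OF L2phi]] by simp
qed

lemma hcov_fd: "((\<lambda>q. cov a \<epsilon> \<phi> q S) has_derivative fd (\<lambda>q. cov a \<epsilon> \<phi> q S) q) (at q)"
  using differentiableI[OF hcov] by (simp add: frechet_derivative_works)

lemma L2_T: "L2 (cov b \<epsilon> (cov a \<epsilon> \<phi>) p)"
proof -
  have "cov b \<epsilon> (cov a \<epsilon> \<phi>) p = (\<lambda>S. fd (\<lambda>q. cov a \<epsilon> \<phi> q S) p (axis b 1) + gbr (Bc \<epsilon> p b) (cov a \<epsilon> \<phi> p S))"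
    by (simp add: cov_def pd_def fun_eq_iff)
  then show ?thesis using L2_add[OF L2_deriv[OF L2_cov hcov_fd] L2_gbr[OF L2_cov]] by simp
qed

lemma pd_LBstar: "pd b (LBstar \<epsilon> \<phi>) p T = 2 *\<^sub>R - (\<Sum>a\<in>UNIV. intprod a (pd b (cov a \<epsilon> \<phi>) p) T)"
proof -
  have h: "((\<lambda>q. LBstar \<epsilon> \<phi> q T) has_derivative
      (\<lambda>v. 2 *\<^sub>R - (\<Sum>a\<in>UNIV. intprod a (\<lambda>S. fd (\<lambda>q. cov a \<epsilon> \<phi> q S) p v) T))) (at p)"
    unfolding LBstar_def DBstar_def
    by (intro has_derivative_scaleR_right has_derivative_minus has_derivative_sum hd_intprod hcov_fd)
  show ?thesis
    unfolding pd_def[of b "LBstar \<epsilon> \<phi>"] frechet_derivative_at[OF h, symmetric]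
    by (simp add: pd_eta)
qed

lemma cov_LBstar: "cov b \<epsilon> (LBstar \<epsilon> \<phi>) p T = (-2) *\<^sub>R (\<Sum>a\<in>UNIV. intprod a (cov b \<epsilon> (cov a \<epsilon> \<phi>) p) T)"
proof -
  have eq: "cov b \<epsilon> (cov a \<epsilon> \<phi>) p = (\<lambda>S. pd b (cov a \<epsilon> \<phi>) p S + gbr (Bc \<epsilon> p b) (cov a \<epsilon> \<phi> p S))" for a
    by (simp only: cov_def[of b] fun_eq_iff) simp
  have 1: "gbr (Bc \<epsilon> p b) (LBstar \<epsilon> \<phi> p T) = (-2) *\<^sub>R (\<Sum>a\<in>UNIV. intprod a (\<lambda>S. gbr (Bc \<epsilon> p b) (cov a \<epsilon> \<phi> p S)) T)"
    by (simp only: LBstar_def DBstar_def gbr_scale2 gbr_minus2 gbr_sum2 intprod_lin[OF bl_gbr]) simp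
  have 2: "(-2) *\<^sub>R (\<Sum>a\<in>UNIV. intprod a (cov b \<epsilon> (cov a \<epsilon> \<phi>) p) T)
     = (-2) *\<^sub>R (\<Sum>a\<in>UNIV. intprod a (pd b (cov a \<epsilon> \<phi>) p) T) + (-2) *\<^sub>R (\<Sum>a\<in>UNIV. intprod a (\<lambda>S. gbr (Bc \<epsilon> p b) (cov a \<epsilon> \<phi> p S)) T)"
    by (simp only: eq intprod_add sum.distrib scaleR_add_right)
  show ?thesis
    unfolding 2 cov_def[of b \<epsilon> "LBstar \<epsilon> \<phi>"] 1 pd_LBstar by simp
qed

end


definition lin3 :: "real \<Rightarrow> real \<Rightarrow> real \<Rightarrow> gmat" where
  "lin3 x y z = x *\<^sub>R gi + y *\<^sub>R gj + z *\<^sub>R gk"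

lemma iq_all: "(\<forall>i::iq. P i) \<longleftrightarrow> P Q1 \<and> P Q2 \<and> P Q3 \<and> P Q4"
  by (metis iq.exhaust)

lemma lin3_entries:
  "lin3 x y z $ Q1 $ Q1 = 0" "lin3 x y z $ Q1 $ Q2 = x" "lin3 x y z $ Q1 $ Q3 = y" "lin3 x y z $ Q1 $ Q4 = z"
  "lin3 x y z $ Q2 $ Q1 = -x" "lin3 x y z $ Q2 $ Q2 = 0" "lin3 x y z $ Q2 $ Q3 = -z" "lin3 x y z $ Q2 $ Q4 = y"
  "lin3 x y z $ Q3 $ Q1 = -y" "lin3 x y z $ Q3 $ Q2 = z" "lin3 x y z $ Q3 $ Q3 = 0" "lin3 x y z $ Q3 $ Q4 = -x"
  "lin3 x y z $ Q4 $ Q1 = -z" "lin3 x y z $ Q4 $ Q2 = -y" "lin3 x y z $ Q4 $ Q3 = x" "lin3 x y z $ Q4 $ Q4 = 0"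
  by (simp_all add: lin3_def gi_def gj_def gk_def op_mat_def basis_q_def axis_def)

lemma lin3_add: "lin3 a b c + lin3 a' b' c' = lin3 (a + a') (b + b') (c + c')"
  by (simp add: lin3_def algebra_simps)
lemma lin3_diff: "lin3 a b c - lin3 a' b' c' = lin3 (a - a') (b - b') (c - c')"
  by (simp add: lin3_def algebra_simps)
lemma lin3_scale: "r *\<^sub>R lin3 a b c = lin3 (r * a) (r * b) (r * c)"
  by (simp add: lin3_def algebra_simps)
lemma lin3_zero: "(0::gmat) = lin3 0 0 0"
  by (simp add: lin3_def)

lemma gbr_lin3: "gbr (lin3 x y z) (lin3 x' y' z') =
   lin3 (2 * (y * z' - z * y')) (2 * (z * x' - x * z')) (2 * (x * y' - y * x'))"
proof (rule entry_eqI)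
  fix i j
  show "gbr (lin3 x y z) (lin3 x' y' z') $ i $ j =
   lin3 (2 * (y * z' - z * y')) (2 * (z * x' - x * z')) (2 * (x * y' - y * x')) $ i $ j"
    by (cases i; cases j) (simp_all add: gbr_def matrix_matrix_mult_def UNIV_iq lin3_entries algebra_simps)
qed

definition mx :: "pt \<Rightarrow> ix \<Rightarrow> real" where
  "mx v a = (case a of P1 \<Rightarrow> - v$P2 | P2 \<Rightarrow> v$P1 | P3 \<Rightarrow> v$P4 | P4 \<Rightarrow> - v$P3 | _ \<Rightarrow> 0)"
definition my :: "pt \<Rightarrow> ix \<Rightarrow> real" where
  "my v a = (case a of P1 \<Rightarrow> - v$P3 | P2 \<Rightarrow> - v$P4 | P3 \<Rightarrow> v$P1 | P4 \<Rightarrow> v$P2 | _ \<Rightarrow> 0)"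
definition mz :: "pt \<Rightarrow> ix \<Rightarrow> real" where
  "mz v a = (case a of P1 \<Rightarrow> - v$P4 | P2 \<Rightarrow> v$P3 | P3 \<Rightarrow> - v$P2 | P4 \<Rightarrow> v$P1 | _ \<Rightarrow> 0)"

lemma Mc_lin3: "Mc v a = lin3 (mx v a) (my v a) (mz v a)"
  by (cases a) (simp_all add: Mc_def mx_def my_def mz_def lin3_def)


definition gx :: "ix \<Rightarrow> ix \<Rightarrow> real" where
  "gx b a = (if (b,a) = (P1,P2) \<or> (b,a) = (P4,P3) then 2 else if (b,a) = (P2,P1) \<or> (b,a) = (P3,P4) then -2 else 0)"
definition gy :: "ix \<Rightarrow> ix \<Rightarrow> real" where
  "gy b a = (if (b,a) = (P1,P3) \<or> (b,a) = (P2,P4) then 2 else if (b,a) = (P3,P1) \<or> (b,a) = (P4,P2) then -2 else 0)"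
definition gz :: "ix \<Rightarrow> ix \<Rightarrow> real" where
  "gz b a = (if (b,a) = (P1,P4) \<or> (b,a) = (P3,P2) then 2 else if (b,a) = (P4,P1) \<or> (b,a) = (P2,P3) then -2 else 0)"

definition Gm :: "ix \<Rightarrow> ix \<Rightarrow> gmat" where
  "Gm b a = lin3 (gx b a) (gy b a) (gz b a)"

lemma lin3_eq: "x = x' \<Longrightarrow> y = y' \<Longrightarrow> z = z' \<Longrightarrow> lin3 x y z = lin3 x' y' z'"
  by simp

lemma Fx_poly: "a \<noteq> b \<Longrightarrow> (\<epsilon>^2 + ysq p) * (mx (axis b 1) a - mx (axis a 1) b) - 2 * (yv p (axis b 1) * mx p a - yv p (axis a 1) * mx p b)
   + 2 * (my p b * mz p a - mz p b * my p a) = \<epsilon>^2 * gx b a"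
  by (cases a; cases b; simp add: mx_def my_def mz_def gx_def yv_def axis_def ysq_def algebra_simps power2_eq_square)
lemma Fy_poly: "a \<noteq> b \<Longrightarrow> (\<epsilon>^2 + ysq p) * (my (axis b 1) a - my (axis a 1) b) - 2 * (yv p (axis b 1) * my p a - yv p (axis a 1) * my p b)
   + 2 * (mz p b * mx p a - mx p b * mz p a) = \<epsilon>^2 * gy b a"
  by (cases a; cases b; simp add: mx_def my_def mz_def gy_def yv_def axis_def ysq_def algebra_simps power2_eq_square)
lemma Fz_poly: "a \<noteq> b \<Longrightarrow> (\<epsilon>^2 + ysq p) * (mz (axis b 1) a - mz (axis a 1) b) - 2 * (yv p (axis b 1) * mz p a - yv p (axis a 1) * mz p b)
   + 2 * (mx p b * my p a - my p b * mx p a) = \<epsilon>^2 * gz b a"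
  by (cases a; cases b; simp add: mx_def my_def mz_def gz_def yv_def axis_def ysq_def algebra_simps power2_eq_square)


lemma coef_eq:
  fixes D :: real
  assumes D: "D \<noteq> 0" and P: "D * (m1 - m2) - 2 * (y1 * ma - y2 * mb) + 2 * c = e2 * g"
  shows "1 / D * m1 - 2 * y1 / D^2 * ma - (1 / D * m2 - 2 * y2 / D^2 * mb) + 2 * c / D^2 = e2 / D^2 * g"
proof -
  have "1 / D * m1 - 2 * y1 / D^2 * ma - (1 / D * m2 - 2 * y2 / D^2 * mb) + 2 * c / D^2
      = (D * (m1 - m2) - 2 * (y1 * ma - y2 * mb) + 2 * c) / D^2"
    using D by (simp add: field_simps power2_eq_square)
  then show ?thesis using P by simp
qed

lemma r_aux: "2 * (1 / (D::real) * u * (1 / D * v) - 1 / D * w * (1 / D * z)) = 2 * (u * v - w * z) / D^2"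
  by (simp add: power2_eq_square diff_divide_distrib)

lemma F_explicit:
  assumes e: "\<epsilon> > 0" and ab: "a \<noteq> b"
  shows "dBv \<epsilon> p a (axis b 1) - dBv \<epsilon> p b (axis a 1) + gbr (Bc \<epsilon> p b) (Bc \<epsilon> p a)
     = (\<epsilon>^2 / (\<epsilon>^2 + ysq p)^2) *\<^sub>R Gm b a"
proof -
  have n: "\<epsilon>^2 + ysq p \<noteq> 0" using ysq_pos[OF e, of p] by linarith
  note r = r_aux[where D="\<epsilon>^2 + ysq p"]
  show ?thesis
    unfolding Gm_def
    apply (simp only: dBv_def Bc_Mc Mc_lin3 lin3_scale lin3_diff lin3_add gbr_lin3)
    apply (rule lin3_eq)
      apply (simp only: r, rule coef_eq[OF n], rule Fx_poly[OF ab])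
     apply (simp only: r, rule coef_eq[OF n], rule Fy_poly[OF ab])
    apply (simp only: r, rule coef_eq[OF n], rule Fz_poly[OF ab])
    done
qed


lemma intprod_add': "intprod a (\<lambda>V. f V + g V) = (\<lambda>U. intprod a f U + intprod a g U)"
  by (rule ext) (rule intprod_add)
lemma intprod_scale': "intprod a (\<lambda>V. c *\<^sub>R f V) = (\<lambda>U. c *\<^sub>R intprod a f U)"
  by (rule ext) (rule intprod_scale)
lemma intprod_sum': "intprod a (\<lambda>V. \<Sum>i\<in>I. f i V) = (\<lambda>U. \<Sum>i\<in>I. intprod a (f i) U)"
  by (rule ext) (rule intprod_sum)

lemma sw_add': "sw k l (\<lambda>S. f S + g S) = (\<lambda>V. sw k l f V + sw k l g V)"
  by (rule ext) (simp add: sw_def intprod_add' swedge_add2')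
lemma sw_scale': "sw k l (\<lambda>S. c *\<^sub>R f S) = (\<lambda>V. c *\<^sub>R sw k l f V)"
  by (rule ext) (simp add: sw_def intprod_scale' swedge_scale2')
lemma sw_sum': "sw k l (\<lambda>S. \<Sum>i\<in>I. f i S) = (\<lambda>V. \<Sum>i\<in>I. sw k l (f i) V)"
  by (rule ext) (simp add: sw_def intprod_sum' swedge_sum2')

lemma L2_scale: "L2 (f::ix set \<Rightarrow> gmat) \<Longrightarrow> L2 (\<lambda>S. c *\<^sub>R f S)"
  by (rule L2_lin[where h="\<lambda>x. c *\<^sub>R x", OF bounded_linear_scaleR_right])

lemma sum_gx: "(\<Sum>b\<in>UNIV. \<Sum>a\<in>UNIV. gx b a *\<^sub>R (f b a::'a::real_vector)) = 2 *\<^sub>R (f P1 P2 - f P2 P1 - f P3 P4 + f P4 P3)"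
  by (simp add: UNIV_ix gx_def) (simp add: algebra_simps)
lemma sum_gy: "(\<Sum>b\<in>UNIV. \<Sum>a\<in>UNIV. gy b a *\<^sub>R (f b a::'a::real_vector)) = 2 *\<^sub>R (f P1 P3 - f P3 P1 + f P2 P4 - f P4 P2)"
  by (simp add: UNIV_ix gy_def) (simp add: algebra_simps)
lemma sum_gz: "(\<Sum>b\<in>UNIV. \<Sum>a\<in>UNIV. gz b a *\<^sub>R (f b a::'a::real_vector)) = 2 *\<^sub>R (f P1 P4 - f P4 P1 - f P2 P3 + f P3 P2)"
  by (simp add: UNIV_ix gz_def) (simp add: algebra_simps)

lemma Gm_zero: "b \<notin> Pperp \<or> a \<notin> Pperp \<Longrightarrow> Gm b a = 0"
  by (auto simp: Gm_def gx_def gy_def gz_def Pperp_def lin3_def)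

lemma Gm_diag: "Gm a a = 0"
  by (cases a) (simp_all add: Gm_def gx_def gy_def gz_def lin3_def)


lemma sw_zero: "sw k l (\<lambda>S. 0) V = 0"
  by (simp add: sw_def swedge_ev intprod_def)

theorem proposition2p3:
  fixes \<epsilon> :: real and \<phi> :: gform and p :: pt and U :: "ix set"
  assumes "\<epsilon> > 0"
    and "smooth_form \<phi>"
    and "g_valued \<phi>"
    and "\<forall>x. in_Lambda2plus (\<phi> x)"
  shows "LB \<epsilon> (LBstar \<epsilon> \<phi>) p U =
           rough_lap \<epsilon> \<phi> p U
           - 2 *\<^sub>R (\<Sum>k\<in>Pperp. \<Sum>l\<in>Pperp.
                 swedge (ev k) (\<lambda>T. gbr (eval2 (FB \<epsilon> p) k l) (intprod l (\<phi> p) T)) U)"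
proof -
  note e = assms(1) and sm = assms(2) and L = assms(4)
  define T where "T a b = cov b \<epsilon> (cov a \<epsilon> \<phi>) p" for a b
  define Fm where "Fm b a = eval2 (FB \<epsilon> p) b a" for b a
  define c where "c = \<epsilon>^2 / (\<epsilon>^2 + ysq p)^2"
  define \<psi> where "\<psi> = \<phi> p"
  define Cf where "Cf a b = (\<lambda>S. gbr (Fm b a) (\<psi> S))" for a b
  define Sy where "Sy a b = (\<lambda>S. (1/2) *\<^sub>R (T a b S + T b a S))" for a b
  have Fm_exp: "Fm b a = c *\<^sub>R Gm b a" for a b
  proof (cases "a = b")
    case True
    then show ?thesis by (simp add: Fm_def eval2_def Gm_diag)
  next
    case False
    then show ?thesis
      unfolding Fm_def c_def using FB_eval[OF e sm L False] F_explicit[OF e False] by simp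
  qed
  have L2psi: "L2 \<psi>" unfolding \<psi>_def by (rule L2phi[OF e sm L])
  have L2T: "L2 (T a b)" for a b unfolding T_def by (rule L2_T[OF e sm L])
  have comm': "T a b S - T b a S = Cf a b S" for a b S
    unfolding T_def Cf_def Fm_def \<psi>_def by (rule comm[OF e sm L])
  have Tsplit: "T a b = (\<lambda>S. Sy a b S + (1/2) *\<^sub>R Cf a b S)" for a b
  proof (rule ext)
    fix S
    have "Sy a b S + (1/2) *\<^sub>R Cf a b S = (1/2) *\<^sub>R (T a b S + T b a S) + (1/2) *\<^sub>R (T a b S - T b a S)"
      by (simp add: Sy_def comm'[symmetric])
    also have "\<dots> = T a b S" by (simp add: algebra_simps flip: scaleR_add_left)
    finally show "T a b S = Sy a b S + (1/2) *\<^sub>R Cf a b S" by simp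
  qed
  have DBe: "DB \<epsilon> (LBstar \<epsilon> \<phi>) p = (\<lambda>V. (-2) *\<^sub>R (\<Sum>b\<in>UNIV. \<Sum>a\<in>UNIV. sw b a (T a b) V))"
  proof (rule ext)
    fix V
    have cv: "cov b \<epsilon> (LBstar \<epsilon> \<phi>) p = (\<lambda>T'. (-2) *\<^sub>R (\<Sum>a\<in>UNIV. intprod a (T a b) T'))" for b
      by (rule ext) (simp add: cov_LBstar[OF e sm L] T_def)
    show "DB \<epsilon> (LBstar \<epsilon> \<phi>) p V = (-2) *\<^sub>R (\<Sum>b\<in>UNIV. \<Sum>a\<in>UNIV. sw b a (T a b) V)"
      by (simp only: DB_expand cv swedge_scale2 swedge_sum2) (simp add: sw_def scaleR_sum_right)
  qed
  have step1: "LB \<epsilon> (LBstar \<epsilon> \<phi>) p U = (-4) *\<^sub>R (\<Sum>b\<in>UNIV. \<Sum>a\<in>UNIV. PP (sw b a (T a b)) U)"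
    unfolding LB_def Pplus_PP DBe by (simp only: PP_scale PP_sum) simp
  have step2: "PP (sw b a (T a b)) U = PP (sw b a (Sy a b)) U + (1/2) *\<^sub>R PP (sw b a (Cf a b)) U" for a b
    unfolding Tsplit[of a b] by (simp add: sw_add' sw_scale' PP_add PP_scale)
  have Sysym: "Sy a b = Sy b a" for a b by (simp add: Sy_def fun_eq_iff add.commute)
  have L2Sy: "L2 (Sy a b)" for a b unfolding Sy_def by (intro L2_scale L2_add L2T)
  have G: "PP (sw b a (Sy a b)) U + PP (sw a b (Sy a b)) U = (if a = b then (1/2) *\<^sub>R Sy a b U else 0)" for a b
  proof -
    have "PP (\<lambda>V. sw b a (Sy a b) V + sw a b (Sy a b) V) U = (if a = b then (1/2) *\<^sub>R Sy a b U else 0)"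
      by (rule G1[OF L2Sy])
    then show ?thesis by (simp only: PP_add)
  qed
  have swp: "(\<Sum>b\<in>UNIV. \<Sum>a\<in>UNIV. PP (sw a b (Sy a b)) U) = (\<Sum>b\<in>UNIV. \<Sum>a\<in>UNIV. PP (sw b a (Sy a b)) U)"
    by (subst sum.swap) (simp add: Sysym)
  have "2 *\<^sub>R (\<Sum>b\<in>UNIV. \<Sum>a\<in>UNIV. PP (sw b a (Sy a b)) U)
      = (\<Sum>b\<in>UNIV. \<Sum>a\<in>UNIV. PP (sw b a (Sy a b)) U + PP (sw a b (Sy a b)) U)"
    using swp by (simp add: sum.distrib scaleR_2)
  also have "\<dots> = (\<Sum>b\<in>UNIV. \<Sum>a\<in>UNIV. (if a = b then (1/2) *\<^sub>R Sy a b U else 0))"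
    by (simp only: G)
  also have "\<dots> = (\<Sum>b\<in>UNIV. (1/2) *\<^sub>R Sy b b U)"
    by (simp add: sum.delta)
  also have "\<dots> = (1/2) *\<^sub>R (\<Sum>b\<in>UNIV. T b b U)"
    by (simp add: Sy_def scaleR_sum_right)
  finally have h3: "2 *\<^sub>R (\<Sum>b\<in>UNIV. \<Sum>a\<in>UNIV. PP (sw b a (Sy a b)) U) = (1/2) *\<^sub>R (\<Sum>b\<in>UNIV. T b b U)" .
  have step3: "(\<Sum>b\<in>UNIV. \<Sum>a\<in>UNIV. PP (sw b a (Sy a b)) U) = (1/4) *\<^sub>R (\<Sum>b\<in>UNIV. T b b U)"
  proof -
    have "(1/2) *\<^sub>R (2 *\<^sub>R (\<Sum>b\<in>UNIV. \<Sum>a\<in>UNIV. PP (sw b a (Sy a b)) U)) = (1/2) *\<^sub>R ((1/2) *\<^sub>R (\<Sum>b\<in>UNIV. T b b U))"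
      by (simp only: h3)
    then show ?thesis by simp
  qed
  define Xf where "Xf = (\<lambda>V. (\<Sum>b\<in>UNIV. \<Sum>a\<in>UNIV. sw b a (Cf a b) V))"
  have step4a: "(\<Sum>b\<in>UNIV. \<Sum>a\<in>UNIV. PP (sw b a (Cf a b)) U) = PP Xf U"
    by (simp add: Xf_def PP_sum)
  have a1: "sw b a (Cf a b) V = c *\<^sub>R (gx b a *\<^sub>R gbr gi (sw b a \<psi> V) + gy b a *\<^sub>R gbr gj (sw b a \<psi> V)
      + gz b a *\<^sub>R gbr gk (sw b a \<psi> V))" for a b V
    unfolding Cf_def Fm_exp Gm_def lin3_def
    by (simp add: gbr_scale1 gbr_add1 sw_scale' sw_add' sw_lin[OF bl_gbr])
  have Xf_eq: "Xf = (\<lambda>V. (2 * c) *\<^sub>R (gbr gi (Yi \<psi> V) + gbr gj (Yj \<psi> V) + gbr gk (Yk \<psi> V)))"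
  proof (rule ext)
    fix V
    have "Xf V = c *\<^sub>R ((\<Sum>b\<in>UNIV. \<Sum>a\<in>UNIV. gx b a *\<^sub>R gbr gi (sw b a \<psi> V))
        + (\<Sum>b\<in>UNIV. \<Sum>a\<in>UNIV. gy b a *\<^sub>R gbr gj (sw b a \<psi> V))
        + (\<Sum>b\<in>UNIV. \<Sum>a\<in>UNIV. gz b a *\<^sub>R gbr gk (sw b a \<psi> V)))"
      by (simp add: Xf_def a1 scaleR_sum_right sum.distrib scaleR_add_right)
    also have "\<dots> = (2 * c) *\<^sub>R (gbr gi (Yi \<psi> V) + gbr gj (Yj \<psi> V) + gbr gk (Yk \<psi> V))"
    proof -
      have sx: "(\<Sum>b\<in>UNIV. \<Sum>a\<in>UNIV. gx b a *\<^sub>R gbr gi (sw b a \<psi> V)) = 2 *\<^sub>R gbr gi (Yi \<psi> V)"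
        using sum_gx[of "\<lambda>b a. gbr gi (sw b a \<psi> V)"] by (simp add: Yi_def gbr_add2 gbr_diff2)
      have sy: "(\<Sum>b\<in>UNIV. \<Sum>a\<in>UNIV. gy b a *\<^sub>R gbr gj (sw b a \<psi> V)) = 2 *\<^sub>R gbr gj (Yj \<psi> V)"
        using sum_gy[of "\<lambda>b a. gbr gj (sw b a \<psi> V)"] by (simp add: Yj_def gbr_add2 gbr_diff2)
      have sz: "(\<Sum>b\<in>UNIV. \<Sum>a\<in>UNIV. gz b a *\<^sub>R gbr gk (sw b a \<psi> V)) = 2 *\<^sub>R gbr gk (Yk \<psi> V)"
        using sum_gz[of "\<lambda>b a. gbr gk (sw b a \<psi> V)"] by (simp add: Yk_def gbr_add2 gbr_diff2)
      show ?thesis unfolding sx sy sz by (simp add: scaleR_add_right mult.commute)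
    qed
    finally show "Xf V = (2 * c) *\<^sub>R (gbr gi (Yi \<psi> V) + gbr gj (Yj \<psi> V) + gbr gk (Yk \<psi> V))" .
  qed
  have PPX: "PP Xf U = Xf U"
    unfolding Xf_eq
    by (simp add: PP_scale PP_add PP_lin[OF bl_gbr, symmetric] G2[OF L2psi])
  have z: "b \<notin> Pperp \<or> a \<notin> Pperp \<Longrightarrow> sw b a (Cf a b) U = 0" for a b
    by (simp add: Cf_def Fm_exp Gm_zero gbr_zero1 sw_zero)
  have rhs_term: "swedge (ev k) (\<lambda>T. gbr (eval2 (FB \<epsilon> p) k l) (intprod l (\<phi> p) T)) U = sw k l (Cf l k) U" for k l
    by (simp add: sw_def Cf_def Fm_def \<psi>_def intprod_lin[OF bl_gbr])
  have fin: "finite (UNIV :: ix set)" by simp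
  have step5: "Xf U = (\<Sum>k\<in>Pperp. \<Sum>l\<in>Pperp. swedge (ev k) (\<lambda>T. gbr (eval2 (FB \<epsilon> p) k l) (intprod l (\<phi> p) T)) U)"
  proof -
    have "Xf U = (\<Sum>b\<in>Pperp. \<Sum>a\<in>UNIV. sw b a (Cf a b) U)"
      unfolding Xf_def using z by (intro sum.mono_neutral_right) auto
    also have "\<dots> = (\<Sum>b\<in>Pperp. \<Sum>a\<in>Pperp. sw b a (Cf a b) U)"
      using z by (intro sum.cong refl sum.mono_neutral_right) auto
    finally show ?thesis by (simp add: rhs_term)
  qed
  have rl: "rough_lap \<epsilon> \<phi> p U = - (\<Sum>b\<in>UNIV. T b b U)"
    by (simp add: rough_lap_def T_def)
  have "LB \<epsilon> (LBstar \<epsilon> \<phi>) p U = (-4) *\<^sub>R ((\<Sum>b\<in>UNIV. \<Sum>a\<in>UNIV. PP (sw b a (Sy a b)) U)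
        + (1/2) *\<^sub>R (\<Sum>b\<in>UNIV. \<Sum>a\<in>UNIV. PP (sw b a (Cf a b)) U))"
    unfolding step1 step2 by (simp add: sum.distrib scaleR_sum_right)
  also have "\<dots> = (-4) *\<^sub>R ((1/4) *\<^sub>R (\<Sum>b\<in>UNIV. T b b U) + (1/2) *\<^sub>R Xf U)"
    unfolding step3 step4a PPX ..
  also have "\<dots> = - (\<Sum>b\<in>UNIV. T b b U) - 2 *\<^sub>R Xf U"
    by (simp add: algebra_simps)
  finally show ?thesis unfolding rl step5 .
qed


end
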